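(* For any Young diagram $Y$, $$\frac{2\sum_{u\in Y}c(u)}{H_Y}=\sum_{(x,y)\in Cor(Y)}\frac{y-x}{H_{Y\setminus\{(x,y)\}}}$$ and $$\frac{2\sum_{u\in Y}c(u)}{H_Y}=\sum_{hd\in HD(Y)}\frac{1}{H_{Y\setminus hd}}-\sum_{vd\in VD(Y)}\frac{1}{H_{Y\setminus vd}}.$$
   Context: Boxes of a Young diagram (English convention, rows left-justified, weakly decreasing from top) are written $(x,y)$ for the box in the $x$-th row from the top and $y$-th column from the left. The content of $u=(x,y)$ is $c(u)=y-x$. The hook length $h(u)$ is the number of boxes in the same column below $u$ or in the same row to its right, including $u$; $H_Y=\prod_{u\in Y}h(u)$, with $H_\emptyset=1$. $Cor(Y)$ is the set of corners: boxes with no box below them and no box to their right. $HD(Y)$ (resp. $VD(Y)$) is the set of horizontal (resp. vertical) dominos removable from $Y$, i.e. pairs of adjacent boxes in the same row (resp. same column) whose removal from $Y$ leaves a Young diagram. *)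

theory Defs
  imports Complex_Main
begin

text \<open>Young diagrams (English convention) as finite sets of boxes (x,y), 1-based:
  x = row index from top, y = column index from left.  Downward closure in both
  coordinates encodes left-justified rows of weakly decreasing length.\<close>

definition young_diagram :: "(nat \<times> nat) set \<Rightarrow> bool" where
  "young_diagram Y \<longleftrightarrow> finite Y \<and> (\<forall>(x,y)\<in>Y. 1 \<le> x \<and> 1 \<le> y) \<and>
     (\<forall>x y x' y'. (x,y) \<in> Y \<and> 1 \<le> x' \<and> x' \<le> x \<and> 1 \<le> y' \<and> y' \<le> y \<longrightarrow> (x',y') \<in> Y)"

definition content :: "nat \<times> nat \<Rightarrow> int" where
  "content u = int (snd u) - int (fst u)"

definition hook :: "(nat \<times> nat) set \<Rightarrow> nat \<times> nat \<Rightarrow> nat" where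
  "hook Y u = card {v \<in> Y. snd v = snd u \<and> fst v \<ge> fst u}
            + card {v \<in> Y. fst v = fst u \<and> snd v > snd u}"

definition hook_prod :: "(nat \<times> nat) set \<Rightarrow> nat" where
  "hook_prod Y = (\<Prod>u\<in>Y. hook Y u)"

definition corners :: "(nat \<times> nat) set \<Rightarrow> (nat \<times> nat) set" where
  "corners Y = {(x,y) \<in> Y. (x+1,y) \<notin> Y \<and> (x,y+1) \<notin> Y}"

definition HD :: "(nat \<times> nat) set \<Rightarrow> (nat \<times> nat) set set" where
  "HD Y = {{(x,y),(x,y+1)} | x y. (x,y) \<in> Y \<and> (x,y+1) \<in> Y \<and>
                                 young_diagram (Y - {(x,y),(x,y+1)})}"

definition VD :: "(nat \<times> nat) set \<Rightarrow> (nat \<times> nat) set set" where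
  "VD Y = {{(x,y),(x+1,y)} | x y. (x,y) \<in> Y \<and> (x+1,y) \<in> Y \<and>
                                 young_diagram (Y - {(x,y),(x+1,y)})}"

end

theory Submission
  imports Defs "HOL-Real_Asymp.Real_Asymp"
begin

lemma pf_term:
  fixes a x y z :: real
  assumes "z \<noteq> x" "z \<noteq> y" "x \<noteq> y"
  shows "a/(z-x)*(1-1/(z-y)) = a*(1-1/(x-y))/(z-x) - a/(y-x)/(z-y)"
proof -
  have 1: "z - x \<noteq> 0" "z - y \<noteq> 0" "x - y \<noteq> 0" "y - x \<noteq> 0" using assms by auto
  have e1: "1-1/(z-y) = (z-y-1)/(z-y)" using 1 by (simp add: field_simps)
  have e2: "1-1/(x-y) = (x-y-1)/(x-y)" using 1 by (simp add: field_simps)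
  have e3: "a/(y-x) = - a/(x-y)" using 1 by (simp add: field_simps)
  show ?thesis unfolding e1 e2 e3 using 1 by (simp add: divide_simps) (simp add: algebra_simps)
qed

definition alpha :: "'a set \<Rightarrow> ('a \<Rightarrow> real) \<Rightarrow> 'a \<Rightarrow> real" where
  "alpha S d i = - (\<Prod>k\<in>S-{i}. 1 - 1/(d i - d k))"

lemma pf:
  assumes "finite S" "inj_on d S" "z \<notin> d ` S"
  shows "(\<Prod>k\<in>S. 1 - 1/(z - d k)) = 1 + (\<Sum>i\<in>S. alpha S d i / (z - d i))"
  using assms
proof (induction S arbitrary: z rule: finite_induct)
  case empty
  then show ?case by simp
next
  case (insert e S)
  have injS: "inj_on d S" using insert.prems by auto
  have ne: "d e \<notin> d ` S" using insert.prems insert.hyps by auto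
  have zS: "z \<notin> d ` S" and ze: "z \<noteq> d e" using insert.prems by auto
  have IHe: "(\<Prod>k\<in>S. 1 - 1/(d e - d k)) = 1 + (\<Sum>i\<in>S. alpha S d i / (d e - d i))"
    using insert.IH[OF injS ne] .
  have ae: "alpha (insert e S) d e = - (1 + (\<Sum>i\<in>S. alpha S d i / (d e - d i)))"
  proof -
    have "alpha (insert e S) d e = - (\<Prod>k\<in>S. 1 - 1/(d e - d k))"
      unfolding alpha_def using insert.hyps by simp
    then show ?thesis using IHe by simp
  qed
  have ai: "alpha (insert e S) d i = alpha S d i * (1 - 1/(d i - d e))" if "i \<in> S" for i
  proof -
    have "insert e S - {i} = insert e (S - {i})" using that insert.hyps by auto
    then show ?thesis unfolding alpha_def using insert.hyps that
      by (simp add: prod.insert_remove)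
  qed
  have dne: "d i \<noteq> d e" if "i \<in> S" for i using ne that by (metis image_eqI)
  have trm: "alpha S d i / (z - d i) * (1 - 1/(z - d e)) =
      alpha S d i * (1 - 1/(d i - d e)) / (z - d i) - alpha S d i / (d e - d i) / (z - d e)"
    if "i \<in> S" for i
  proof -
    have a: "z - d i \<noteq> 0" using zS that by auto
    have b: "z - d e \<noteq> 0" using ze by auto
    have c: "d i - d e \<noteq> 0" "d e - d i \<noteq> 0" using dne[OF that] by auto
    show ?thesis by (rule pf_term) (use a b c in auto)
  qed
  have "(\<Prod>k\<in>insert e S. 1 - 1/(z - d k)) = (1 - 1/(z - d e)) * (\<Prod>k\<in>S. 1 - 1/(z - d k))"
    using insert.hyps by simp
  also have "\<dots> = (1 - 1/(z - d e)) * (1 + (\<Sum>i\<in>S. alpha S d i / (z - d i)))"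
    using insert.IH[OF injS zS] by simp
  also have "\<dots> = 1 - 1/(z - d e) + (\<Sum>i\<in>S. alpha S d i / (z - d i) * (1 - 1/(z - d e)))"
    by (simp add: sum_distrib_left sum_distrib_right algebra_simps)
  also have "\<dots> = 1 - 1/(z - d e) + (\<Sum>i\<in>S. alpha S d i * (1 - 1/(d i - d e)) / (z - d i))
        - (\<Sum>i\<in>S. alpha S d i / (d e - d i)) / (z - d e)"
  proof -
    have "(\<Sum>i\<in>S. alpha S d i / (z - d i) * (1 - 1/(z - d e))) =
       (\<Sum>i\<in>S. alpha S d i * (1 - 1/(d i - d e)) / (z - d i) - alpha S d i / (d e - d i) / (z - d e))"
      by (rule sum.cong[OF refl trm])
    also have "\<dots> = (\<Sum>i\<in>S. alpha S d i * (1 - 1/(d i - d e)) / (z - d i))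
        - (\<Sum>i\<in>S. alpha S d i / (d e - d i)) / (z - d e)"
      by (simp only: sum_subtractf sum_divide_distrib)
    finally show ?thesis by simp
  qed
  also have "\<dots> = 1 + (\<Sum>i\<in>S. alpha (insert e S) d i / (z - d i)) + alpha (insert e S) d e / (z - d e)"
  proof -
    have "(\<Sum>i\<in>S. alpha (insert e S) d i / (z - d i)) = (\<Sum>i\<in>S. alpha S d i * (1 - 1/(d i - d e)) / (z - d i))"
      by (rule sum.cong) (simp_all add: ai)
    moreover have "\<And>T s w::real. w \<noteq> 0 \<Longrightarrow> 1 - 1/w + T - s/w = 1 + T + (-(1+s))/w"
      by (simp add: field_simps)
    ultimately show ?thesis using ze by (simp add: ae)
  qed
  also have "\<dots> = 1 + (\<Sum>i\<in>insert e S. alpha (insert e S) d i / (z - d i))"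
    using insert.hyps by simp
  finally show ?case .
qed

lemma lim_a: "((\<lambda>z::real. z^2 * (1/(z-c)^2)) \<longlongrightarrow> 1) at_top"
  by real_asymp
lemma lim_b: "((\<lambda>z::real. z^3 * (1/(z-c)^2) - z) \<longlongrightarrow> 2*c) at_top"
  by real_asymp
lemma lim_c: "((\<lambda>z::real. 1/(z-c)^2) \<longlongrightarrow> 0) at_top"
  by real_asymp
lemma lim_inv: "((\<lambda>z::real. 1/z) \<longlongrightarrow> 0) at_top"
  by real_asymp

lemma box_lim:
  fixes c :: "'a \<Rightarrow> real"
  assumes "finite S"
  shows "((\<lambda>z. \<Prod>v\<in>S. 1 - 1/(z - c v)^2) \<longlongrightarrow> 1) at_top \<and>
         ((\<lambda>z. z^2 * (1 - (\<Prod>v\<in>S. 1 - 1/(z - c v)^2))) \<longlongrightarrow> real (card S)) at_top \<and>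
         ((\<lambda>z. z^3 * (1 - (\<Prod>v\<in>S. 1 - 1/(z - c v)^2)) - real (card S) * z) \<longlongrightarrow> 2 * (\<Sum>v\<in>S. c v)) at_top"
  using assms
proof (induction S rule: finite_induct)
  case empty
  then show ?case by simp
next
  case (insert a S)
  define P where "P = (\<lambda>z. \<Prod>v\<in>S. 1 - 1/(z - c v)^2)"
  define n where "n = real (card S)"
  have P1: "(P \<longlongrightarrow> 1) at_top" and P2: "((\<lambda>z. z^2 * (1 - P z)) \<longlongrightarrow> n) at_top"
    and P3: "((\<lambda>z. z^3 * (1 - P z) - n * z) \<longlongrightarrow> 2 * (\<Sum>v\<in>S. c v)) at_top"
    using insert.IH unfolding P_def n_def by auto
  have eqP: "(\<Prod>v\<in>insert a S. 1 - 1/(z - c v)^2) = (1 - 1/(z - c a)^2) * P z" for z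
    using insert.hyps unfolding P_def by simp
  have cn: "real (card (insert a S)) = n + 1" using insert.hyps unfolding n_def by simp
  have cs: "(\<Sum>v\<in>insert a S. c v) = c a + (\<Sum>v\<in>S. c v)" using insert.hyps by simp
  have L1: "((\<lambda>z. (1 - 1/(z - c a)^2) * P z) \<longlongrightarrow> (1 - 0) * 1) at_top"
    by (intro tendsto_intros lim_c P1)
  have L2: "((\<lambda>z. z^2 * (1 - P z) + (z^2 * (1/(z - c a)^2)) * P z) \<longlongrightarrow> n + 1 * 1) at_top"
    by (intro tendsto_intros lim_a P1 P2)
  have zP: "((\<lambda>z. - (z^2 * (1 - P z)) * (1/z)) \<longlongrightarrow> - n * 0) at_top"
    by (intro tendsto_intros lim_inv P2)
  have zP': "((\<lambda>z. z * (P z - 1)) \<longlongrightarrow> 0) at_top"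
  proof -
    have "eventually (\<lambda>z. - (z^2 * (1 - P z)) * (1/z) = z * (P z - 1)) at_top"
      using eventually_gt_at_top[of "0::real"]
      by eventually_elim (simp add: power2_eq_square field_simps)
    from tendsto_cong[OF this] zP show ?thesis by simp
  qed
  have L3: "((\<lambda>z. (z^3 * (1 - P z) - n * z) + (z^3 * (1/(z - c a)^2) - z) * P z + z * (P z - 1))
      \<longlongrightarrow> 2 * (\<Sum>v\<in>S. c v) + 2 * c a * 1 + 0) at_top"
    by (intro tendsto_intros lim_b P1 P3 zP')
  show ?case
  proof (intro conjI)
    show "((\<lambda>z. \<Prod>v\<in>insert a S. 1 - 1/(z - c v)^2) \<longlongrightarrow> 1) at_top"
      using L1 by (simp add: eqP)
    show "((\<lambda>z. z^2 * (1 - (\<Prod>v\<in>insert a S. 1 - 1/(z - c v)^2))) \<longlongrightarrow> real (card (insert a S))) at_top"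
      using L2 unfolding eqP cn by (simp add: algebra_simps)
    show "((\<lambda>z. z^3 * (1 - (\<Prod>v\<in>insert a S. 1 - 1/(z - c v)^2)) - real (card (insert a S)) * z)
        \<longlongrightarrow> 2 * (\<Sum>v\<in>insert a S. c v)) at_top"
      using L3 unfolding eqP cn cs by (simp add: algebra_simps)
  qed
qed


lemma lim_d: "((\<lambda>z::real. z/(z-c)) \<longlongrightarrow> 1) at_top"
  by real_asymp
lemma lim_e: "((\<lambda>z::real. z*c/(z-c)) \<longlongrightarrow> c) at_top"
  by real_asymp
lemma lim_f: "((\<lambda>z::real. a/(z-c)) \<longlongrightarrow> 0) at_top"
  by real_asymp

lemma analytic_core:
  fixes c :: "'a \<Rightarrow> real" and d :: "'b \<Rightarrow> real"
  assumes S: "finite S" and I: "finite I" and inj: "inj_on d I"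
    and ev: "eventually (\<lambda>z. z * (\<Prod>v\<in>S. 1 - 1/(z - c v)^2) = (z + K) * (\<Prod>k\<in>I. 1 - 1/(z - d k))) at_top"
  shows "(\<Sum>i\<in>I. alpha I d i * (d i + K)) = - real (card S)"
    and "(\<Sum>i\<in>I. alpha I d i * (d i + K) * d i) = - 2 * (\<Sum>v\<in>S. c v)"
proof -
  define P where "P = (\<lambda>z. \<Prod>v\<in>S. 1 - 1/(z - c v)^2)"
  define n where "n = real (card S)"
  define \<rho> where "\<rho> = (\<lambda>i. alpha I d i * (d i + K))"
  define A where "A = (\<Sum>i\<in>I. alpha I d i)"
  have P2: "((\<lambda>z. z^2 * (1 - P z)) \<longlongrightarrow> n) at_top"
    and P3: "((\<lambda>z. z^3 * (1 - P z) - n * z) \<longlongrightarrow> 2 * (\<Sum>v\<in>S. c v)) at_top"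
    using box_lim[OF S, of c] unfolding P_def n_def by auto
  have bigz: "eventually (\<lambda>z. z \<notin> d ` I) at_top"
  proof -
    have "eventually (\<lambda>z. z > Max (insert 0 (d ` I))) at_top" by (rule eventually_gt_at_top)
    then show ?thesis
    proof eventually_elim
      case (elim z)
      show ?case
      proof
        assume "z \<in> d ` I"
        then have "z \<le> Max (insert 0 (d ` I))" using I by simp
        with elim show False by simp
      qed
    qed
  qed
  have key: "eventually (\<lambda>z. z * (1 - P z) = - (K + A) - (\<Sum>i\<in>I. \<rho> i / (z - d i))) at_top"
    using ev bigz
  proof eventually_elim
    case (elim z)
    have e1: "z * P z = (z + K) * (1 + (\<Sum>i\<in>I. alpha I d i / (z - d i)))"
      using elim(1) pf[OF I inj elim(2)] unfolding P_def by simp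
    have e2: "(z + K) * (alpha I d i / (z - d i)) = alpha I d i + \<rho> i / (z - d i)" if "i \<in> I" for i
    proof -
      have "z - d i \<noteq> 0" using elim(2) that by auto
      then show ?thesis unfolding \<rho>_def by (simp add: field_simps)
    qed
    have "(z + K) * (1 + (\<Sum>i\<in>I. alpha I d i / (z - d i))) = z + K + (\<Sum>i\<in>I. (z + K) * (alpha I d i / (z - d i)))"
      by (simp add: algebra_simps sum_distrib_left)
    also have "\<dots> = z + K + (\<Sum>i\<in>I. alpha I d i + \<rho> i / (z - d i))"
      using e2 by (metis (no_types, lifting) sum.cong)
    also have "\<dots> = z + K + A + (\<Sum>i\<in>I. \<rho> i / (z - d i))"
      by (simp add: sum.distrib A_def)
    finally show ?case using e1 by (simp add: algebra_simps)
  qed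
  have Z1: "((\<lambda>z. z * (1 - P z)) \<longlongrightarrow> 0) at_top"
  proof -
    have "((\<lambda>z. (z^2 * (1 - P z)) * (1/z)) \<longlongrightarrow> n * 0) at_top"
      by (intro tendsto_intros P2 lim_inv)
    moreover have "eventually (\<lambda>z. (z^2 * (1 - P z)) * (1/z) = z * (1 - P z)) at_top"
      using eventually_gt_at_top[of "0::real"]
      by eventually_elim (simp add: power2_eq_square)
    ultimately show ?thesis using tendsto_cong by fastforce
  qed
  have Z1': "((\<lambda>z. - (K + A) - (\<Sum>i\<in>I. \<rho> i / (z - d i))) \<longlongrightarrow> - (K + A) - (\<Sum>i\<in>I. 0)) at_top"
    by (intro tendsto_intros lim_f)
  have KA: "K + A = 0"
  proof -
    have "((\<lambda>z. z * (1 - P z)) \<longlongrightarrow> - (K + A)) at_top"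
      using Z1' tendsto_cong[OF key] by simp
    from tendsto_unique[OF _ this Z1] show ?thesis by simp
  qed
  have key2: "eventually (\<lambda>z. z * (1 - P z) = - (\<Sum>i\<in>I. \<rho> i / (z - d i))) at_top"
    using key KA by simp
  have Z2: "((\<lambda>z. - (\<Sum>i\<in>I. \<rho> i * (z / (z - d i)))) \<longlongrightarrow> - (\<Sum>i\<in>I. \<rho> i * 1)) at_top"
    by (intro tendsto_intros lim_d)
  have ev2: "eventually (\<lambda>z. - (\<Sum>i\<in>I. \<rho> i * (z / (z - d i))) = z^2 * (1 - P z)) at_top"
    using key2
  proof eventually_elim
    case (elim z)
    have "z^2 * (1 - P z) = z * (z * (1 - P z))" by (simp add: power2_eq_square)
    also have "\<dots> = - (\<Sum>i\<in>I. \<rho> i * (z / (z - d i)))"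
      using elim by (simp add: sum_distrib_left mult.commute)
    finally show ?case by simp
  qed
  have sum1: "(\<Sum>i\<in>I. \<rho> i) = - n"
  proof -
    have "((\<lambda>z. z^2 * (1 - P z)) \<longlongrightarrow> - (\<Sum>i\<in>I. \<rho> i)) at_top"
      using Z2 tendsto_cong[OF ev2] by simp
    from tendsto_unique[OF _ this P2] show ?thesis by simp
  qed
  have Z3: "((\<lambda>z. - (\<Sum>i\<in>I. \<rho> i * (z * d i / (z - d i)))) \<longlongrightarrow> - (\<Sum>i\<in>I. \<rho> i * d i)) at_top"
    by (intro tendsto_intros lim_e)
  have ev3: "eventually (\<lambda>z. - (\<Sum>i\<in>I. \<rho> i * (z * d i / (z - d i))) = z^3 * (1 - P z) - n * z) at_top"
    using ev2 bigz
  proof eventually_elim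
    case (elim z)
    have t: "\<rho> i * (z * d i / (z - d i)) = z * (\<rho> i * (z / (z - d i))) - z * \<rho> i" if "i \<in> I" for i
    proof -
      have "z - d i \<noteq> 0" using elim(2) that by auto
      then show ?thesis by (simp add: field_simps)
    qed
    have "z^3 * (1 - P z) - n * z = z * (z^2 * (1 - P z)) + (\<Sum>i\<in>I. \<rho> i) * z"
      using sum1 by (simp add: power3_eq_cube power2_eq_square)
    also have "\<dots> = - (\<Sum>i\<in>I. z * (\<rho> i * (z / (z - d i))) - z * \<rho> i)"
    proof -
      have a: "z * (z^2 * (1 - P z)) = z * (- (\<Sum>i\<in>I. \<rho> i * (z / (z - d i))))"
        using elim(1) by simp
      have b: "(\<Sum>i\<in>I. \<rho> i) * z = (\<Sum>i\<in>I. z * \<rho> i)"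
        by (simp add: sum_distrib_left mult.commute)
      show ?thesis unfolding a b by (simp add: sum_subtractf sum_distrib_left)
    qed
    also have "\<dots> = - (\<Sum>i\<in>I. \<rho> i * (z * d i / (z - d i)))"
      using t by simp
    finally show ?case by simp
  qed
  have sum2: "(\<Sum>i\<in>I. \<rho> i * d i) = - 2 * (\<Sum>v\<in>S. c v)"
  proof -
    have "((\<lambda>z. z^3 * (1 - P z) - n * z) \<longlongrightarrow> - (\<Sum>i\<in>I. \<rho> i * d i)) at_top"
      using Z3 tendsto_cong[OF ev3] by simp
    from tendsto_unique[OF _ this P3] show ?thesis by simp
  qed
  show "(\<Sum>i\<in>I. alpha I d i * (d i + K)) = - real (card S)"
    using sum1 unfolding \<rho>_def n_def .
  show "(\<Sum>i\<in>I. alpha I d i * (d i + K) * d i) = - 2 * (\<Sum>v\<in>S. c v)"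
    using sum2 unfolding \<rho>_def .
qed


lemma tele:
  fixes a :: real
  assumes "s \<le> N" "a + real s > 0"
  shows "(\<Prod>k\<in>{s<..N}. (a + real k - 1)/(a + real k)) = (a + real s)/(a + real N)"
  using assms
proof (induction N)
  case 0
  then show ?case by simp
next
  case (Suc N)
  show ?case
  proof (cases "s = Suc N")
    case True
    then show ?thesis using Suc.prems by simp
  next
    case False
    then have sN: "s \<le> N" using Suc.prems by simp
    have "{s<..Suc N} = insert (Suc N) {s<..N}" using sN by auto
    then have "(\<Prod>k\<in>{s<..Suc N}. (a + real k - 1)/(a + real k)) =
        (a + real (Suc N) - 1)/(a + real (Suc N)) * ((a + real s)/(a + real N))"
      using Suc.IH[OF sN Suc.prems(2)] by simp
    also have "\<dots> = (a + real s)/(a + real (Suc N))"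
    proof -
      have "a + real N > 0" using sN Suc.prems(2) by simp
      moreover have "a + real (Suc N) > 0" using sN Suc.prems(2) by simp
      ultimately show ?thesis by simp
    qed
    finally show ?thesis .
  qed
qed

lemma row_lemma:
  fixes \<mu> :: "nat \<Rightarrow> nat"
  assumes anti: "\<And>a b. i < a \<Longrightarrow> a \<le> b \<Longrightarrow> b \<le> N \<Longrightarrow> \<mu> b \<le> \<mu> a"
    and lt: "\<And>k. i < k \<Longrightarrow> k \<le> N \<Longrightarrow> \<mu> k < m" and m1: "1 \<le> m" and iN: "i \<le> N"
  shows "(\<Prod>j\<in>{1..<m}. (real m - real j + 1 + real (card {k\<in>{i<..N}. j \<le> \<mu> k}))
                       / (real m - real j + real (card {k\<in>{i<..N}. j \<le> \<mu> k})))
       = (real m + real N - real i) * (\<Prod>k\<in>{i<..N}. (real m + real k - real i - 1 - real (\<mu> k))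
                       / (real m + real k - real i - real (\<mu> k)))"
  using anti lt m1
proof (induction m arbitrary: \<mu>)
  case 0
  then show ?case by simp
next
  case (Suc m)
  show ?case
  proof (cases "m = 0")
    case True
    then have z: "\<mu> k = 0" if "i < k" "k \<le> N" for k using Suc.prems(2)[OF that] by simp
    have "(\<Prod>k\<in>{i<..N}. (real (Suc m) + real k - real i - 1 - real (\<mu> k))
                       / (real (Suc m) + real k - real i - real (\<mu> k)))
        = (\<Prod>k\<in>{i<..N}. ((1 - real i) + real k - 1) / ((1 - real i) + real k))"
      by (rule prod.cong) (auto simp: z True)
    also have "\<dots> = (1 - real i + real i)/(1 - real i + real N)"
      by (rule tele) (use iN in auto)
    finally show ?thesis using True iN by simp
  next
    case False
    then have m1: "1 \<le> m" by simp
    define \<mu>' where "\<mu>' = (\<lambda>k. \<mu> k - 1)"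
    have anti': "\<mu>' b \<le> \<mu>' a" if "i < a" "a \<le> b" "b \<le> N" for a b
      using Suc.prems(1)[OF that] unfolding \<mu>'_def by simp
    have lt': "\<mu>' k < m" if "i < k" "k \<le> N" for k
      using Suc.prems(2)[OF that] m1 unfolding \<mu>'_def by simp
    note IH = Suc.IH[OF anti' lt' m1]
    define A where "A = {k\<in>{i<..N}. 1 \<le> \<mu> k}"
    define s where "s = Max (insert i A)"
    have finA: "finite A" unfolding A_def by simp
    have sN: "s \<le> N" and iss: "i \<le> s" unfolding s_def using finA iN by (auto simp: A_def)
    have Aeq: "A = {i<..s}"
    proof
      show "A \<subseteq> {i<..s}" unfolding s_def using finA by (auto simp: A_def)
      show "{i<..s} \<subseteq> A"
      proof
        fix k assume k: "k \<in> {i<..s}"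
        then have "s \<noteq> i" by auto
        then have "s \<in> A" unfolding s_def using finA Max_in[of "insert i A"] by auto
        then show "k \<in> A" using k Suc.prems(1)[of k s] unfolding A_def by auto
      qed
    qed
    have ge1: "1 \<le> \<mu> k" if "i < k" "k \<le> s" for k
    proof -
      have "k \<in> A" using Aeq that by simp
      then show ?thesis unfolding A_def by simp
    qed
    have z0: "\<mu> k = 0" if "s < k" "k \<le> N" for k
    proof -
      have "k \<notin> A" using Aeq that by simp
      then show ?thesis unfolding A_def using that iss by simp
    qed
    have cardA: "card A = s - i" using Aeq by simp
    have split: "{i<..N} = {i<..s} \<union> {s<..N}" using iss sN by auto
    have disj: "{i<..s} \<inter> {s<..N} = {}" by auto
    define g1 where "g1 = (\<lambda>k. (real (Suc m) + real k - real i - 1 - real (\<mu> k))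
                       / (real (Suc m) + real k - real i - real (\<mu> k)))"
    define g2 where "g2 = (\<lambda>k. (real m + real k - real i - 1 - real (\<mu>' k))
                       / (real m + real k - real i - real (\<mu>' k)))"
    define B where "B = (\<Prod>k\<in>{i<..s}. g1 k)"
    have B2: "(\<Prod>k\<in>{i<..s}. g2 k) = B" unfolding B_def
    proof (rule prod.cong)
      fix k assume "k \<in> {i<..s}"
      then have "1 \<le> \<mu> k" using ge1 by auto
      then have e: "real (\<mu> k) = real (\<mu>' k) + 1" unfolding \<mu>'_def by simp
      show "g2 k = g1 k" unfolding g1_def g2_def e by (simp add: algebra_simps)
    qed simp
    have T1: "(\<Prod>k\<in>{s<..N}. g1 k) = (real (Suc m) - real i + real s)/(real (Suc m) - real i + real N)"
    proof -
      have "(\<Prod>k\<in>{s<..N}. g1 k) = (\<Prod>k\<in>{s<..N}. ((real (Suc m) - real i) + real k - 1)/((real (Suc m) - real i) + real k))"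
        by (rule prod.cong) (auto simp: g1_def z0 algebra_simps)
      also have "\<dots> = ((real (Suc m) - real i) + real s)/((real (Suc m) - real i) + real N)" by (rule tele) (use sN iss in auto)
      finally show ?thesis .
    qed
    have T2: "(\<Prod>k\<in>{s<..N}. g2 k) = (real m - real i + real s)/(real m - real i + real N)"
    proof -
      have "(\<Prod>k\<in>{s<..N}. g2 k) = (\<Prod>k\<in>{s<..N}. ((real m - real i) + real k - 1)/((real m - real i) + real k))"
        by (rule prod.cong) (auto simp: g2_def z0 \<mu>'_def algebra_simps)
      also have "\<dots> = ((real m - real i) + real s)/((real m - real i) + real N)" by (rule tele) (use sN iss m1 in auto)
      finally show ?thesis .
    qed
    have R1: "(real (Suc m) + real N - real i) * (\<Prod>k\<in>{i<..N}. g1 k) = (real (Suc m) - real i + real s) * B"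
    proof -
      have "(\<Prod>k\<in>{i<..N}. g1 k) = B * (\<Prod>k\<in>{s<..N}. g1 k)"
        unfolding B_def split by (rule prod.union_disjoint) (auto)
      moreover have "real (Suc m) + real N - real i > 0" using iN by simp
      ultimately show ?thesis using T1 by (simp add: field_simps)
    qed
    have R2: "(real m + real N - real i) * (\<Prod>k\<in>{i<..N}. g2 k) = (real m - real i + real s) * B"
    proof -
      have "(\<Prod>k\<in>{i<..N}. g2 k) = B * (\<Prod>k\<in>{s<..N}. g2 k)"
        unfolding B2[symmetric] split by (rule prod.union_disjoint) (auto)
      moreover have "real m + real N - real i > 0" using iN m1 by simp
      ultimately show ?thesis using T2 by (simp add: field_simps)
    qed
    define f where "f = (\<lambda>j. (real (Suc m) - real j + 1 + real (card {k\<in>{i<..N}. j \<le> \<mu> k}))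
                       / (real (Suc m) - real j + real (card {k\<in>{i<..N}. j \<le> \<mu> k})))"
    have f1: "f 1 = (real (Suc m) - real i + real s) / (real m - real i + real s)"
    proof -
      have "card {k\<in>{i<..N}. 1 \<le> \<mu> k} = s - i" using cardA unfolding A_def .
      then show ?thesis unfolding f_def using iss by (simp add: algebra_simps)
    qed
    have fS: "f (Suc j) = (real m - real j + 1 + real (card {k\<in>{i<..N}. j \<le> \<mu>' k}))
                       / (real m - real j + real (card {k\<in>{i<..N}. j \<le> \<mu>' k}))" if "1 \<le> j" for j
    proof -
      have "{k\<in>{i<..N}. Suc j \<le> \<mu> k} = {k\<in>{i<..N}. j \<le> \<mu>' k}"
        unfolding \<mu>'_def using that by auto
      then show ?thesis unfolding f_def by simp
    qed
    have L: "(\<Prod>j\<in>{1..<Suc m}. f j) = f 1 * (\<Prod>j\<in>{1..<m}. f (Suc j))"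
    proof -
      have "(\<Prod>j\<in>{1..<Suc m}. f j) = f 1 * (\<Prod>j\<in>{Suc 1..<Suc m}. f j)"
        by (rule prod.atLeast_Suc_lessThan) (use m1 in simp)
      also have "(\<Prod>j\<in>{Suc 1..<Suc m}. f j) = (\<Prod>j\<in>{1..<m}. f (Suc j))"
        by (rule prod.shift_bounds_Suc_ivl)
      finally show ?thesis .
    qed
    have L2: "(\<Prod>j\<in>{1..<m}. f (Suc j)) = (real m - real i + real s) * B"
    proof -
      have "(\<Prod>j\<in>{1..<m}. f (Suc j)) = (\<Prod>j\<in>{1..<m}. (real m - real j + 1 + real (card {k\<in>{i<..N}. j \<le> \<mu>' k}))
                       / (real m - real j + real (card {k\<in>{i<..N}. j \<le> \<mu>' k})))"
        by (rule prod.cong) (auto simp: fS)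
      also have "\<dots> = (real m + real N - real i) * (\<Prod>k\<in>{i<..N}. g2 k)"
        using IH unfolding g2_def .
      finally show ?thesis using R2 by simp
    qed
    have pos: "real m - real i + real s > 0" using iss m1 by simp
    have "(\<Prod>j\<in>{1..<Suc m}. f j) = f 1 * ((real m - real i + real s) * B)"
      using L L2 by simp
    also have "\<dots> = (real (Suc m) - real i + real s) * B"
      using f1 pos by simp
    also have "\<dots> = (real (Suc m) + real N - real i) * (\<Prod>k\<in>{i<..N}. g1 k)"
      using R1 by simp
    finally show ?thesis unfolding f_def g1_def .
  qed
qed


definition rl :: "(nat \<times> nat) set \<Rightarrow> nat \<Rightarrow> nat" where
  "rl Y x = card {y. (x,y) \<in> Y}"
definition cl :: "(nat \<times> nat) set \<Rightarrow> nat \<Rightarrow> nat" where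
  "cl Y y = card {x. (x,y) \<in> Y}"

lemma yd_finite: "young_diagram Y \<Longrightarrow> finite Y" unfolding young_diagram_def by simp
lemma yd_pos: "young_diagram Y \<Longrightarrow> (x,y) \<in> Y \<Longrightarrow> 1 \<le> x \<and> 1 \<le> y"
  unfolding young_diagram_def by blast
lemma yd_closed: "young_diagram Y \<Longrightarrow> (x,y) \<in> Y \<Longrightarrow> 1 \<le> x' \<Longrightarrow> x' \<le> x \<Longrightarrow> 1 \<le> y' \<Longrightarrow> y' \<le> y \<Longrightarrow> (x',y') \<in> Y"
  unfolding young_diagram_def by blast

lemma fin_row: "finite Y \<Longrightarrow> finite {y. (x,y) \<in> Y}"
proof -
  assume "finite Y"
  then have "finite (snd ` Y)" by simp
  moreover have "{y. (x,y) \<in> Y} \<subseteq> snd ` Y" by force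
  ultimately show ?thesis by (rule finite_subset[rotated])
qed
lemma fin_col: "finite Y \<Longrightarrow> finite {x. (x,y) \<in> Y}"
proof -
  assume "finite Y"
  then have "finite (fst ` Y)" by simp
  moreover have "{x. (x,y) \<in> Y} \<subseteq> fst ` Y" by force
  ultimately show ?thesis by (rule finite_subset[rotated])
qed

lemma mem_rl:
  assumes Y: "young_diagram Y"
  shows "(x,y) \<in> Y \<longleftrightarrow> 1 \<le> x \<and> 1 \<le> y \<and> y \<le> rl Y x"
proof
  assume xy: "(x,y) \<in> Y"
  then have p: "1 \<le> x" "1 \<le> y" using yd_pos[OF Y] by auto
  have "{1..y} \<subseteq> {y. (x,y) \<in> Y}" using yd_closed[OF Y xy] p by auto
  then have "card {1..y} \<le> rl Y x" unfolding rl_def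
    by (rule card_mono[OF fin_row[OF yd_finite[OF Y]]])
  then show "1 \<le> x \<and> 1 \<le> y \<and> y \<le> rl Y x" using p by simp
next
  assume h: "1 \<le> x \<and> 1 \<le> y \<and> y \<le> rl Y x"
  show "(x,y) \<in> Y"
  proof (rule ccontr)
    assume n: "(x,y) \<notin> Y"
    have "{y. (x,y) \<in> Y} \<subseteq> {1..<y}"
    proof
      fix b assume b: "b \<in> {y. (x,y) \<in> Y}"
      then have "1 \<le> b" using yd_pos[OF Y] by auto
      moreover have "b < y"
      proof (rule ccontr)
        assume "\<not> b < y"
        then have "(x,y) \<in> Y" using yd_closed[OF Y, of x b x y] b h by auto
        with n show False by simp
      qed
      ultimately show "b \<in> {1..<y}" by simp
    qed
    then have "rl Y x \<le> card {1..<y}" unfolding rl_def by (rule card_mono[rotated]) simp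
    then show False using h by simp arith
  qed
qed

lemma mem_cl:
  assumes Y: "young_diagram Y"
  shows "(x,y) \<in> Y \<longleftrightarrow> 1 \<le> x \<and> 1 \<le> y \<and> x \<le> cl Y y"
proof
  assume xy: "(x,y) \<in> Y"
  then have p: "1 \<le> x" "1 \<le> y" using yd_pos[OF Y] by auto
  have "{1..x} \<subseteq> {x. (x,y) \<in> Y}" using yd_closed[OF Y xy] p by auto
  then have "card {1..x} \<le> cl Y y" unfolding cl_def
    by (rule card_mono[OF fin_col[OF yd_finite[OF Y]]])
  then show "1 \<le> x \<and> 1 \<le> y \<and> x \<le> cl Y y" using p by simp
next
  assume h: "1 \<le> x \<and> 1 \<le> y \<and> x \<le> cl Y y"
  show "(x,y) \<in> Y"
  proof (rule ccontr)
    assume n: "(x,y) \<notin> Y"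
    have "{x. (x,y) \<in> Y} \<subseteq> {1..<x}"
    proof
      fix a assume a: "a \<in> {x. (x,y) \<in> Y}"
      then have "1 \<le> a" using yd_pos[OF Y] by auto
      moreover have "a < x"
      proof (rule ccontr)
        assume "\<not> a < x"
        then have "(x,y) \<in> Y" using yd_closed[OF Y, of a y x y] a h by auto
        with n show False by simp
      qed
      ultimately show "a \<in> {1..<x}" by simp
    qed
    then have "cl Y y \<le> card {1..<x}" unfolding cl_def by (rule card_mono[rotated]) simp
    then show False using h by simp arith
  qed
qed

lemma rl_anti:
  assumes Y: "young_diagram Y" and "1 \<le> a" "a \<le> b"
  shows "rl Y b \<le> rl Y a"
proof (cases "rl Y b = 0")
  case False
  then have "(b, rl Y b) \<in> Y" using mem_rl[OF Y] assms by simp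
  then have "(a, rl Y b) \<in> Y" using yd_closed[OF Y] assms False by simp
  then show ?thesis using mem_rl[OF Y] by simp
qed simp

lemma rl_zero:
  assumes Y: "young_diagram Y" and "card Y < x"
  shows "rl Y x = 0"
proof (rule ccontr)
  assume "rl Y x \<noteq> 0"
  then have "(x,1) \<in> Y" using mem_rl[OF Y] assms by simp
  then have "(\<lambda>k. (k,1)) ` {1..x} \<subseteq> Y" using yd_closed[OF Y] by auto
  then have "card ((\<lambda>k. (k,1::nat)) ` {1..x}) \<le> card Y"
    by (rule card_mono[OF yd_finite[OF Y]])
  moreover have "card ((\<lambda>k. (k,1::nat)) ` {1..x}) = x"
    by (subst card_image) (auto simp: inj_on_def)
  ultimately show False using assms by simp
qed

lemma hook_eq:
  assumes Y: "young_diagram Y" and xy: "(x,y) \<in> Y"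
  shows "hook Y (x,y) = (cl Y y + 1 - x) + (rl Y x - y)"
proof -
  have c: "{v \<in> Y. snd v = snd (x,y) \<and> fst v \<ge> fst (x,y)} = (\<lambda>a. (a,y)) ` {x..cl Y y}"
    using mem_cl[OF Y] xy by (auto simp: image_iff)
  have r: "{v \<in> Y. fst v = fst (x,y) \<and> snd v > snd (x,y)} = (\<lambda>b. (x,b)) ` {y<..rl Y x}"
    using mem_rl[OF Y] xy by (auto simp: image_iff)
  show ?thesis unfolding hook_def c r
    by (simp add: card_image inj_on_def)
qed

lemma hook_pos:
  assumes Y: "young_diagram Y" and xy: "(x,y) \<in> Y"
  shows "hook Y (x,y) \<ge> 1"
  using hook_eq[OF assms] mem_cl[OF Y] xy by arith

lemma Y_Sigma:
  assumes Y: "young_diagram Y" and N: "card Y \<le> N"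
  shows "Y = Sigma {1..N} (\<lambda>x. {1..rl Y x})"
proof
  show "Y \<subseteq> Sigma {1..N} (\<lambda>x. {1..rl Y x})"
  proof
    fix v assume v: "v \<in> Y"
    obtain x y where xy: "v = (x,y)" by force
    have "x \<le> N"
    proof (rule ccontr)
      assume "\<not> x \<le> N"
      then have "rl Y x = 0" using rl_zero[OF Y] N by simp
      then show False using v xy mem_rl[OF Y] by auto
    qed
    then show "v \<in> Sigma {1..N} (\<lambda>x. {1..rl Y x})" using v xy mem_rl[OF Y] by auto
  qed
  show "Sigma {1..N} (\<lambda>x. {1..rl Y x}) \<subseteq> Y" using mem_rl[OF Y] by auto
qed

lemma corner_iff:
  assumes Y: "young_diagram Y" and N: "card Y \<le> N"
  shows "corners Y = (\<lambda>i. (i, rl Y i)) ` {i\<in>{1..N}. rl Y (Suc i) < rl Y i}"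
proof
  show "corners Y \<subseteq> (\<lambda>i. (i, rl Y i)) ` {i\<in>{1..N}. rl Y (Suc i) < rl Y i}"
  proof
    fix u assume u: "u \<in> corners Y"
    obtain i m where im: "u = (i,m)" by force
    have uY: "(i,m) \<in> Y" and n1: "(i+1,m) \<notin> Y" and n2: "(i,m+1) \<notin> Y"
      using u im unfolding corners_def by auto
    have "(i,m) \<in> Sigma {1..N} (\<lambda>x. {1..rl Y x})" using uY Y_Sigma[OF Y N] by blast
    then have iN: "i \<in> {1..N}" by blast
    have m: "m = rl Y i" using uY n2 mem_rl[OF Y] by auto
    have "rl Y (Suc i) < rl Y i" using n1 uY mem_rl[OF Y] m by auto
    then show "u \<in> (\<lambda>i. (i, rl Y i)) ` {i\<in>{1..N}. rl Y (Suc i) < rl Y i}"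
      using iN im m by auto
  qed
  show "(\<lambda>i. (i, rl Y i)) ` {i\<in>{1..N}. rl Y (Suc i) < rl Y i} \<subseteq> corners Y"
    using mem_rl[OF Y] unfolding corners_def by auto
qed


lemma hook_remove:
  assumes fin: "finite Y" and u: "u \<in> Y" and v: "v \<in> Y" "v \<noteq> u"
  shows "hook (Y - {u}) v = hook Y v - (if snd v = snd u \<and> fst v < fst u then 1 else 0)
                                     - (if fst v = fst u \<and> snd v < snd u then 1 else 0)"
proof -
  have c: "{w \<in> Y - {u}. snd w = snd v \<and> fst w \<ge> fst v} = {w \<in> Y. snd w = snd v \<and> fst w \<ge> fst v} - {u}" by auto
  have r: "{w \<in> Y - {u}. fst w = fst v \<and> snd w > snd v} = {w \<in> Y. fst w = fst v \<and> snd w > snd v} - {u}" by auto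
  have f1: "finite {w \<in> Y. snd w = snd v \<and> fst w \<ge> fst v}" using fin by simp
  have f2: "finite {w \<in> Y. fst w = fst v \<and> snd w > snd v}" using fin by simp
  have i1: "u \<in> {w \<in> Y. snd w = snd v \<and> fst w \<ge> fst v} \<longleftrightarrow> snd v = snd u \<and> fst v < fst u"
    using u v by (cases u, cases v) auto
  have i2: "u \<in> {w \<in> Y. fst w = fst v \<and> snd w > snd v} \<longleftrightarrow> fst v = fst u \<and> snd v < snd u"
    using u v by (cases u, cases v) auto
  have v1: "v \<in> {w \<in> Y. snd w = snd v \<and> fst w \<ge> fst v}" using v by simp
  then have p1: "card {w \<in> Y. snd w = snd v \<and> fst w \<ge> fst v} \<ge> 1"
    using f1 by (metis (no_types, lifting) One_nat_def Suc_leI card_gt_0_iff empty_iff)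
  have "card {w \<in> Y. fst w = fst v \<and> snd w > snd v} \<ge> (if fst v = fst u \<and> snd v < snd u then 1 else 0)"
  proof (cases "fst v = fst u \<and> snd v < snd u")
    case True
    then have "u \<in> {w \<in> Y. fst w = fst v \<and> snd w > snd v}" using i2 by simp
    then have "card {w \<in> Y. fst w = fst v \<and> snd w > snd v} > 0" using f2 card_gt_0_iff by blast
    then show ?thesis using True by simp
  next
    case False
    show ?thesis by (subst if_not_P[OF False]) simp
  qed
  then show ?thesis unfolding hook_def c r
    using card_Diff_singleton_if[of "{w \<in> Y. snd w = snd v \<and> fst w \<ge> fst v}" u] card_Diff_singleton_if[of "{w \<in> Y. fst w = fst v \<and> snd w > snd v}" u] i1 i2 p1
    by (auto split: if_splits)
qed

definition dd :: "(nat \<times> nat) set \<Rightarrow> nat \<Rightarrow> real" where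
  "dd Y k = real (rl Y k) - real k"

lemma ratio_lemma:
  assumes Y: "young_diagram Y" and N: "card Y \<le> N" and uc: "(i,m) \<in> corners Y"
  shows "real (hook_prod Y) / real (hook_prod (Y - {(i,m)}))
       = (dd Y i + real N) * (\<Prod>k\<in>{1..N}-{i}. 1 - 1/(dd Y i - dd Y k))"
proof -
  define u where "u = (i,m)"
  have fin: "finite Y" using Y by (rule yd_finite)
  have uY: "(i,m) \<in> Y" and n1: "(i+1,m) \<notin> Y" and n2: "(i,m+1) \<notin> Y"
    using uc unfolding corners_def by auto
  have i1: "1 \<le> i" and m1: "1 \<le> m" using yd_pos[OF Y uY] by auto
  have m: "m = rl Y i" using uY n2 mem_rl[OF Y] by auto
  have clm: "cl Y m = i" using uY n1 mem_cl[OF Y] by auto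
  have rl_next: "rl Y (Suc i) < m" using n1 m1 mem_rl[OF Y, of "i+1" m] i1 by auto
  have iN: "i \<le> N"
  proof (rule ccontr)
    assume "\<not> i \<le> N" then have "rl Y i = 0" using rl_zero[OF Y] N by simp
    then show False using m m1 by simp
  qed
  have hu: "hook Y (i,m) = 1" using hook_eq[OF Y uY] clm m by simp
  define q where "q = (\<lambda>v. real (hook Y v) / real (hook (Y - {(i,m)}) v))"
  have HY: "hook_prod Y = (\<Prod>v\<in>Y-{(i,m)}. hook Y v)"
    unfolding hook_prod_def using prod.remove[OF fin uY, of "hook Y"] hu by simp
  have ratio: "real (hook_prod Y) / real (hook_prod (Y - {(i,m)})) = (\<Prod>v\<in>Y-{(i,m)}. q v)"
    unfolding q_def HY by (simp add: prod_dividef hook_prod_def)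
  define Col where "Col = (\<lambda>k. (k,m)) ` {1..<i}"
  define Row where "Row = (\<lambda>j. (i,j)) ` {1..<m}"
  have ColY: "Col \<subseteq> Y - {(i,m)}" unfolding Col_def using yd_closed[OF Y uY] m1 by auto
  have RowY: "Row \<subseteq> Y - {(i,m)}" unfolding Row_def using yd_closed[OF Y uY] i1 by auto
  have rest: "q v = 1" if "v \<in> (Y - {(i,m)}) - (Col \<union> Row)" for v
  proof -
    obtain a b where v: "v = (a,b)" by force
    have vY: "(a,b) \<in> Y" "(a,b) \<noteq> (i,m)" using that v by auto
    have nc1: "\<not> (b = m \<and> a < i)" using that v vY yd_pos[OF Y vY(1)] unfolding Col_def by auto
    have nc2: "\<not> (a = i \<and> b < m)" using that v vY yd_pos[OF Y vY(1)] unfolding Row_def by auto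
    have z1: "(if snd (a,b) = snd (i,m) \<and> fst (a,b) < fst (i,m) then 1 else 0) = (0::nat)" using nc1 by simp
    have z2: "(if fst (a,b) = fst (i,m) \<and> snd (a,b) < snd (i,m) then 1 else 0) = (0::nat)" using nc2 by simp
    have "hook (Y - {(i,m)}) (a,b) = hook Y (a,b)"
      using hook_remove[OF fin uY vY(1) vY(2)] unfolding z1 z2 by simp
    moreover have "hook Y (a,b) \<ge> 1" by (rule hook_pos[OF Y vY(1)])
    ultimately show ?thesis unfolding q_def v by simp
  qed
  have "(\<Prod>v\<in>Y-{(i,m)}. q v) = (\<Prod>v\<in>Col \<union> Row. q v)"
    by (rule prod.mono_neutral_right) (use fin ColY RowY rest in auto)
  also have "\<dots> = (\<Prod>v\<in>Col. q v) * (\<Prod>v\<in>Row. q v)"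
    by (rule prod.union_disjoint) (auto simp: Col_def Row_def)
  also have "(\<Prod>v\<in>Col. q v) = (\<Prod>k\<in>{1..<i}. q (k,m))"
    unfolding Col_def by (subst prod.reindex) (auto simp: inj_on_def)
  also have "(\<Prod>v\<in>Row. q v) = (\<Prod>j\<in>{1..<m}. q (i,j))"
    unfolding Row_def by (subst prod.reindex) (auto simp: inj_on_def)
  finally have R: "real (hook_prod Y) / real (hook_prod (Y - {(i,m)})) =
      (\<Prod>k\<in>{1..<i}. q (k,m)) * (\<Prod>j\<in>{1..<m}. q (i,j))" using ratio by simp
  have colq: "q (k,m) = 1 - 1/(dd Y i - dd Y k)" if k: "k \<in> {1..<i}" for k
  proof -
    have kY: "(k,m) \<in> Y" using yd_closed[OF Y uY] k m1 by auto
    have rk: "m \<le> rl Y k" using kY mem_rl[OF Y] by auto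
    have h1: "hook Y (k,m) = i + 1 - k + (rl Y k - m)" using hook_eq[OF Y kY] clm by simp
    have h2: "hook (Y - {(i,m)}) (k,m) = hook Y (k,m) - 1"
      using hook_remove[OF fin uY kY] k by auto
    define D where "D = real (rl Y k) - real m + real i - real k"
    have Dp: "D \<ge> 1" unfolding D_def using k rk by auto
    have e1: "real (hook Y (k,m)) = D + 1" using h1 k rk unfolding D_def by (simp add: of_nat_diff)
    have e2: "real (hook (Y - {(i,m)}) (k,m)) = D" using h1 h2 k rk unfolding D_def by (simp add: of_nat_diff)
    have e3: "dd Y i - dd Y k = - D" unfolding dd_def D_def m by simp
    show ?thesis unfolding q_def e1 e2 e3 using Dp by (simp add: field_simps)
  qed
  have clj: "cl Y j = i + card {k\<in>{i<..N}. j \<le> rl Y k}" if j: "j \<in> {1..<m}" for j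
  proof -
    have "{x. (x,j) \<in> Y} = {1..i} \<union> {k\<in>{i<..N}. j \<le> rl Y k}"
    proof (intro set_eqI iffI)
      fix x assume x: "x \<in> {x. (x,j) \<in> Y}"
      then have x1: "1 \<le> x" and jx: "j \<le> rl Y x" using mem_rl[OF Y] by auto
      have "x \<le> N"
      proof (rule ccontr)
        assume "\<not> x \<le> N" then have "rl Y x = 0" using rl_zero[OF Y] N by simp
        then show False using jx j by simp
      qed
      then show "x \<in> {1..i} \<union> {k\<in>{i<..N}. j \<le> rl Y k}" using x1 jx by auto
    next
      fix x assume x: "x \<in> {1..i} \<union> {k\<in>{i<..N}. j \<le> rl Y k}"
      show "x \<in> {x. (x,j) \<in> Y}"
      proof (cases "x \<le> i")
        case True
        then have "(x,j) \<in> Y" using yd_closed[OF Y uY, of x j] x j by auto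
        then show ?thesis by simp
      next
        case False
        then show ?thesis using x j mem_rl[OF Y] by auto
      qed
    qed
    then have "cl Y j = card ({1..i} \<union> {k\<in>{i<..N}. j \<le> rl Y k})" unfolding cl_def by simp
    also have "\<dots> = card {1..i} + card {k\<in>{i<..N}. j \<le> rl Y k}"
      by (rule card_Un_disjoint) auto
    finally show ?thesis by simp
  qed
  have rowq: "q (i,j) = (real m - real j + 1 + real (card {k\<in>{i<..N}. j \<le> rl Y k}))
                       / (real m - real j + real (card {k\<in>{i<..N}. j \<le> rl Y k}))" if j: "j \<in> {1..<m}" for j
  proof -
    have jY: "(i,j) \<in> Y" using yd_closed[OF Y uY] j i1 by auto
    have h1: "hook Y (i,j) = cl Y j + 1 - i + (m - j)" using hook_eq[OF Y jY] m by simp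
    have h2: "hook (Y - {(i,m)}) (i,j) = hook Y (i,j) - 1"
      using hook_remove[OF fin uY jY] j by auto
    show ?thesis unfolding q_def h2 h1 clj[OF j] using j by (simp add: of_nat_diff algebra_simps)
  qed
  have RL: "(\<Prod>j\<in>{1..<m}. q (i,j)) = (real m + real N - real i) *
      (\<Prod>k\<in>{i<..N}. (real m + real k - real i - 1 - real (rl Y k)) / (real m + real k - real i - real (rl Y k)))"
  proof -
    have "(\<Prod>j\<in>{1..<m}. q (i,j)) = (\<Prod>j\<in>{1..<m}. (real m - real j + 1 + real (card {k\<in>{i<..N}. j \<le> rl Y k}))
                       / (real m - real j + real (card {k\<in>{i<..N}. j \<le> rl Y k})))"
      by (rule prod.cong) (simp_all add: rowq)
    also have "\<dots> = (real m + real N - real i) *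
      (\<Prod>k\<in>{i<..N}. (real m + real k - real i - 1 - real (rl Y k)) / (real m + real k - real i - real (rl Y k)))"
    proof (rule row_lemma)
      fix k assume "i < k" "k \<le> N"
      then have "rl Y k \<le> rl Y (Suc i)" using rl_anti[OF Y, of "Suc i" k] by auto
      then show "rl Y k < m" using rl_next by simp
    qed (use rl_anti[OF Y] iN m1 i1 in auto)
    finally show ?thesis .
  qed
  have C: "(\<Prod>k\<in>{1..<i}. q (k,m)) = (\<Prod>k\<in>{1..<i}. 1 - 1/(dd Y i - dd Y k))"
    by (rule prod.cong) (simp_all add: colq)
  have R2: "(\<Prod>k\<in>{i<..N}. (real m + real k - real i - 1 - real (rl Y k)) / (real m + real k - real i - real (rl Y k)))
      = (\<Prod>k\<in>{i<..N}. 1 - 1/(dd Y i - dd Y k))"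
  proof (rule prod.cong)
    fix k assume k: "k \<in> {i<..N}"
    have "rl Y k \<le> rl Y (Suc i)" using rl_anti[OF Y, of "Suc i" k] k by auto
    then have rk: "rl Y k < m" using rl_next by simp
    have e: "dd Y i - dd Y k = real m + real k - real i - real (rl Y k)" unfolding dd_def m by simp
    have p: "real m + real k - real i - real (rl Y k) > 0" using rk k by simp
    show "(real m + real k - real i - 1 - real (rl Y k)) / (real m + real k - real i - real (rl Y k))
        = 1 - 1/(dd Y i - dd Y k)" unfolding e using p by (simp add: field_simps)
  qed simp
  have split: "{1..N} - {i} = {1..<i} \<union> {i<..N}" using i1 iN by auto
  have P: "(\<Prod>k\<in>{1..N}-{i}. 1 - 1/(dd Y i - dd Y k)) =
      (\<Prod>k\<in>{1..<i}. 1 - 1/(dd Y i - dd Y k)) * (\<Prod>k\<in>{i<..N}. 1 - 1/(dd Y i - dd Y k))"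
    unfolding split by (rule prod.union_disjoint) auto
  have di: "dd Y i + real N = real m + real N - real i" unfolding dd_def m by simp
  show ?thesis unfolding R RL C R2[symmetric] P di[symmetric] by simp
qed


lemma helper1:
  fixes a w :: real
  assumes "a > 0" "w - 1 > 0"
  shows "a * w / ((w - 1) * (a + 1)) * ((a - 1) * (a + 1) / a^2) = (a - 1) * w / ((w - 1) * a)"
proof -
  have "a * w / ((w - 1) * (a + 1)) * ((a - 1) * (a + 1) / a^2) = (a * w * ((a - 1) * (a + 1))) / (((w - 1) * (a + 1)) * a^2)"
    by simp
  also have "\<dots> = ((a - 1) * w) * (a * (a + 1)) / (((w - 1) * a) * (a * (a + 1)))"
    by (simp add: power2_eq_square algebra_simps)
  also have "\<dots> = (a - 1) * w / ((w - 1) * a)"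
    using assms by (subst mult_divide_mult_cancel_right) auto
  finally show ?thesis .
qed

lemma helper2:
  fixes t :: real
  assumes "t \<noteq> 0"
  shows "1 - 1/t^2 = (t - 1) * (t + 1) / t^2"
  using assms by (simp add: field_simps power2_eq_square)

lemma helper3:
  fixes b z :: real
  assumes "b > 0" "z > 0"
  shows "b / z * ((b + 1) / b) = (b + 1) / z"
  using assms by (simp add: field_simps)

lemma row_tel:
  fixes w :: real
  assumes "w > real m + 1"
  shows "(\<Prod>j\<in>{1..m}. 1 - 1/(w - real j)^2) = (w - real m - 1) * w / ((w - 1) * (w - real m))"
  using assms
proof (induction m)
  case 0
  then show ?case by simp
next
  case (Suc m)
  have IH: "(\<Prod>j\<in>{1..m}. 1 - 1/(w - real j)^2) = (w - real m - 1) * w / ((w - 1) * (w - real m))"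
    using Suc by simp
  have "(\<Prod>j\<in>{1..Suc m}. 1 - 1/(w - real j)^2) = (\<Prod>j\<in>{1..m}. 1 - 1/(w - real j)^2) * (1 - 1/(w - real (Suc m))^2)"
    by simp
  also have "\<dots> = (w - real m - 1) * w / ((w - 1) * (w - real m)) * (1 - 1/(w - real m - 1)^2)"
    by (simp only: IH of_nat_Suc diff_diff_eq add.commute)
  also have "\<dots> = (w - real (Suc m) - 1) * w / ((w - 1) * (w - real (Suc m)))"
  proof -
    define a where "a = w - real m - 1"
    have a0: "a > 0" "w - 1 > 0" using Suc.prems unfolding a_def by auto
    have e1: "w - real m = a + 1" "w - real (Suc m) = a" "w - real (Suc m) - 1 = a - 1" unfolding a_def by simp_all
    have e2: "w - real m - 1 = a" unfolding a_def by simp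
    have an: "a \<noteq> 0" using a0 by simp
    show ?thesis unfolding e2 unfolding e1 helper2[OF an] by (rule helper1[OF a0])
  qed
  finally show ?case .
qed

lemma tel2:
  fixes z :: real
  assumes "z > 0"
  shows "(\<Prod>i\<in>{1..N}. (z + real i) / (z + real i - 1)) = (z + real N) / z"
  using assms
proof (induction N)
  case 0 then show ?case by simp
next
  case (Suc N)
  have "(\<Prod>i\<in>{1..Suc N}. (z + real i) / (z + real i - 1)) = (z + real N) / z * ((z + real (Suc N)) / (z + real (Suc N) - 1))"
    using Suc by simp
  also have "\<dots> = (z + real (Suc N)) / z"
  proof -
    have e: "z + real (Suc N) - 1 = z + real N" "z + real (Suc N) = (z + real N) + 1" by simp_all
    have p: "z + real N > 0" using Suc.prems by simp
    show ?thesis unfolding e(1) unfolding e(2) using helper3[OF p Suc.prems] .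
  qed
  finally show ?case .
qed

lemma rl0: "young_diagram Y \<Longrightarrow> rl Y 0 = 0"
proof -
  assume Y: "young_diagram Y"
  have "{y. (0,y) \<in> Y} = {}" using yd_pos[OF Y] by fastforce
  then show ?thesis unfolding rl_def by simp
qed

lemma dd_inj:
  assumes Y: "young_diagram Y"
  shows "inj_on (dd Y) {1..N}"
proof -
  have "dd Y b < dd Y a" if "a \<in> {1..N}" "b \<in> {1..N}" "a < b" for a b
    using rl_anti[OF Y, of a b] that unfolding dd_def by auto
  then show ?thesis unfolding inj_on_def by (metis less_irrefl linorder_neqE_nat)
qed


lemma box_identity:
  assumes Y: "young_diagram Y" and N: "N = card Y"
  shows "eventually (\<lambda>z. z * (\<Prod>v\<in>Y. 1 - 1/(z - real_of_int (content v))^2)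
           = (z + real N) * (\<Prod>k\<in>{1..N}. 1 - 1/(z - dd Y k))) at_top"
  using eventually_gt_at_top[of "2 * real N + 2"]
proof eventually_elim
  case (elim z)
  have rlN: "rl Y i \<le> N" for i
  proof (cases "i = 0")
    case True then show ?thesis using rl0[OF Y] by simp
  next
    case False
    have sub: "(\<lambda>j. (i,j)) ` {1..rl Y i} \<subseteq> Y"
    proof
      fix v assume "v \<in> (\<lambda>j. (i,j)) ` {1..rl Y i}"
      then obtain j where "v = (i,j)" "1 \<le> j" "j \<le> rl Y i" by auto
      then show "v \<in> Y" using mem_rl[OF Y, of i j] False by simp
    qed
    have "card ((\<lambda>j. (i,j)) ` {1..rl Y i}) \<le> card Y" by (rule card_mono[OF yd_finite[OF Y] sub])
    moreover have "card ((\<lambda>j. (i,j)) ` {1..rl Y i}) = rl Y i" by (simp add: card_image inj_on_def)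
    ultimately show ?thesis using N by simp
  qed
  have "(\<Prod>v\<in>Y. 1 - 1/(z - real_of_int (content v))^2)
      = (\<Prod>i\<in>{1..N}. \<Prod>j\<in>{1..rl Y i}. 1 - 1/(z - real_of_int (content (i,j)))^2)"
  proof -
    have YS: "Y = Sigma {1..N} (\<lambda>x. {1..rl Y x})" using Y_Sigma[OF Y, of N] N by simp
    have "(\<Prod>v\<in>Y. 1 - 1/(z - real_of_int (content v))^2) = (\<Prod>v\<in>Sigma {1..N} (\<lambda>x. {1..rl Y x}). 1 - 1/(z - real_of_int (content v))^2)"
      using YS by (rule arg_cong)
    also have "\<dots> = (\<Prod>i\<in>{1..N}. \<Prod>j\<in>{1..rl Y i}. 1 - 1/(z - real_of_int (content (i,j)))^2)"
      using prod.Sigma[of "{1..N}" "\<lambda>x. {1..rl Y x}" "\<lambda>i j. 1 - 1/(z - real_of_int (content (i,j)))^2"]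
      by (simp add: case_prod_eta)
    finally show ?thesis .
  qed
  also have "\<dots> = (\<Prod>i\<in>{1..N}. (1 - 1/(z - dd Y i)) * ((z + real i) / (z + real i - 1)))"
  proof (rule prod.cong)
    fix i assume i: "i \<in> {1..N}"
    have "(\<Prod>j\<in>{1..rl Y i}. 1 - 1/(z - real_of_int (content (i,j)))^2)
        = (\<Prod>j\<in>{1..rl Y i}. 1 - 1/((z + real i) - real j)^2)"
      by (rule prod.cong) (simp_all add: content_def algebra_simps)
    also have "\<dots> = ((z + real i) - real (rl Y i) - 1) * (z + real i) / (((z + real i) - 1) * ((z + real i) - real (rl Y i)))"
      by (rule row_tel) (use elim rlN[of i] in auto)
    also have "\<dots> = (1 - 1/(z - dd Y i)) * ((z + real i) / (z + real i - 1))"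
    proof -
      have p: "z + real i - real (rl Y i) > 0" "z + real i - 1 > 0" using elim rlN[of i] by auto
      have e: "z - dd Y i = z + real i - real (rl Y i)" unfolding dd_def by simp
      show ?thesis unfolding e using p by (simp add: field_simps)
    qed
    finally show "(\<Prod>j\<in>{1..rl Y i}. 1 - 1/(z - real_of_int (content (i,j)))^2)
        = (1 - 1/(z - dd Y i)) * ((z + real i) / (z + real i - 1))" .
  qed simp
  also have "\<dots> = (\<Prod>i\<in>{1..N}. 1 - 1/(z - dd Y i)) * (\<Prod>i\<in>{1..N}. (z + real i) / (z + real i - 1))"
    by (rule prod.distrib)
  also have "\<dots> = (\<Prod>i\<in>{1..N}. 1 - 1/(z - dd Y i)) * ((z + real N) / z)"
  proof -
    have "z > 0" using elim by simp
    then show ?thesis by (simp only: tel2)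
  qed
  finally have "(\<Prod>v\<in>Y. 1 - 1/(z - real_of_int (content v))^2) = (\<Prod>i\<in>{1..N}. 1 - 1/(z - dd Y i)) * ((z + real N) / z)" .
  moreover have "z > 0" using elim by simp
  ultimately show ?case by simp
qed


lemma main1:
  assumes Y: "young_diagram Y"
  shows "(\<Sum>u\<in>corners Y. real (hook_prod Y) / real (hook_prod (Y - {u}))) = real (card Y)"
    and "(\<Sum>u\<in>corners Y. real_of_int (content u) * (real (hook_prod Y) / real (hook_prod (Y - {u}))))
         = 2 * real_of_int (\<Sum>u\<in>Y. content u)"
proof -
  define N where "N = card Y"
  define I where "I = {1..N}"
  define d where "d = dd Y"
  define \<rho> where "\<rho> = (\<lambda>i. alpha I d i * (d i + real N))"
  have fin: "finite Y" using Y by (rule yd_finite)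
  note AC = analytic_core[OF fin finite_atLeastAtMost dd_inj[OF Y] box_identity[OF Y N_def]]
  have S1: "(\<Sum>i\<in>I. \<rho> i) = - real (card Y)"
    using AC(1) unfolding \<rho>_def I_def d_def by simp
  have S2: "(\<Sum>i\<in>I. \<rho> i * d i) = - 2 * real_of_int (\<Sum>u\<in>Y. content u)"
    using AC(2) unfolding \<rho>_def I_def d_def by simp
  define CR where "CR = {i\<in>I. rl Y (Suc i) < rl Y i}"
  have CRI: "CR \<subseteq> I" unfolding CR_def by auto
  have cor: "corners Y = (\<lambda>i. (i, rl Y i)) ` CR"
    unfolding CR_def I_def using corner_iff[OF Y, of N] N_def by simp
  have injc: "inj_on (\<lambda>i. (i, rl Y i)) CR" by (auto simp: inj_on_def)
  have zero: "\<rho> i = 0" if i: "i \<in> I - CR" for i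
  proof -
    have iI: "1 \<le> i" "i \<le> N" using i unfolding I_def by auto
    have eq: "rl Y (Suc i) = rl Y i" using i rl_anti[OF Y, of i "Suc i"] unfolding CR_def I_def by auto
    show ?thesis
    proof (cases "i = N")
      case True
      have "rl Y (Suc i) = 0" using rl_zero[OF Y] True N_def by simp
      then have "d i + real N = 0" using eq True unfolding d_def dd_def by simp
      then show ?thesis unfolding \<rho>_def by simp
    next
      case False
      then have SI: "Suc i \<in> I - {i}" using iI unfolding I_def by auto
      have "1 - 1/(d i - d (Suc i)) = 0" using eq unfolding d_def dd_def by simp
      then have "(\<Prod>k\<in>I-{i}. 1 - 1/(d i - d k)) = 0"
        using SI by (intro prod_zero) (auto simp: I_def)
      then show ?thesis unfolding \<rho>_def alpha_def by simp
    qed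
  qed
  have rat: "real (hook_prod Y) / real (hook_prod (Y - {(i, rl Y i)})) = - \<rho> i" if i: "i \<in> CR" for i
  proof -
    have "(i, rl Y i) \<in> corners Y" using cor i by auto
    from ratio_lemma[OF Y _ this, of N] N_def
    show ?thesis unfolding \<rho>_def alpha_def I_def d_def by simp
  qed
  have sumI: "(\<Sum>i\<in>I. f i) = (\<Sum>i\<in>CR. f i)" if "\<And>i. i \<in> I - CR \<Longrightarrow> f i = 0" for f :: "nat \<Rightarrow> real"
    by (rule sum.mono_neutral_right) (use CRI that in \<open>auto simp: I_def\<close>)
  have "(\<Sum>u\<in>corners Y. real (hook_prod Y) / real (hook_prod (Y - {u})))
      = (\<Sum>i\<in>CR. real (hook_prod Y) / real (hook_prod (Y - {(i, rl Y i)})))"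
    unfolding cor by (subst sum.reindex[OF injc]) simp
  also have "\<dots> = (\<Sum>i\<in>CR. - \<rho> i)" by (rule sum.cong) (simp_all add: rat)
  also have "\<dots> = - (\<Sum>i\<in>I. \<rho> i)" using sumI[of \<rho>] zero by (simp add: sum_negf)
  finally show "(\<Sum>u\<in>corners Y. real (hook_prod Y) / real (hook_prod (Y - {u}))) = real (card Y)"
    using S1 by simp
  have "(\<Sum>u\<in>corners Y. real_of_int (content u) * (real (hook_prod Y) / real (hook_prod (Y - {u}))))
      = (\<Sum>i\<in>CR. real_of_int (content (i, rl Y i)) * (real (hook_prod Y) / real (hook_prod (Y - {(i, rl Y i)}))))"
    unfolding cor by (subst sum.reindex[OF injc]) simp
  also have "\<dots> = (\<Sum>i\<in>CR. - (\<rho> i * d i))"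
    by (rule sum.cong) (simp_all add: rat content_def d_def dd_def)
  also have "\<dots> = - (\<Sum>i\<in>I. \<rho> i * d i)" using sumI[of "\<lambda>i. \<rho> i * d i"] zero by (simp add: sum_negf)
  finally show "(\<Sum>u\<in>corners Y. real_of_int (content u) * (real (hook_prod Y) / real (hook_prod (Y - {u}))))
         = 2 * real_of_int (\<Sum>u\<in>Y. content u)"
    using S2 by simp
qed


lemma dom_lemma:
  assumes Y: "young_diagram Y" and ab: "(a,b) \<in> Y" and le: "x \<le> a" "y \<le> b" and ne: "(a,b) \<noteq> (x,y)"
    and pos: "1 \<le> x" "1 \<le> y"
  shows "(x+1,y) \<in> Y \<or> (x,y+1) \<in> Y"
proof (cases "x < a")
  case True
  then have "(x+1,y) \<in> Y" using yd_closed[OF Y ab] le pos by auto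
  then show ?thesis by simp
next
  case False
  then have "a = x" using le by simp
  then have "y < b" using ne le by auto
  then have "(x,y+1) \<in> Y" using yd_closed[OF Y ab] le pos by auto
  then show ?thesis by simp
qed

lemma yd_diff:
  assumes Y: "young_diagram Y" and D: "D \<subseteq> Y"
  shows "young_diagram (Y - D) \<longleftrightarrow>
    (\<forall>a b a' b'. (a,b) \<in> Y - D \<and> (a',b') \<in> D \<longrightarrow> \<not> (a' \<le> a \<and> b' \<le> b))"
proof
  assume Z: "young_diagram (Y - D)"
  show "\<forall>a b a' b'. (a,b) \<in> Y - D \<and> (a',b') \<in> D \<longrightarrow> \<not> (a' \<le> a \<and> b' \<le> b)"
  proof (intro allI impI notI)
    fix a b a' b' assume h: "(a,b) \<in> Y - D \<and> (a',b') \<in> D" and l: "a' \<le> a \<and> b' \<le> b"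
    have "1 \<le> a'" "1 \<le> b'" using yd_pos[OF Y, of a' b'] h D by auto
    then have "(a',b') \<in> Y - D" using yd_closed[OF Z, of a b a' b'] h l by auto
    then show False using h by simp
  qed
next
  assume h: "\<forall>a b a' b'. (a,b) \<in> Y - D \<and> (a',b') \<in> D \<longrightarrow> \<not> (a' \<le> a \<and> b' \<le> b)"
  show "young_diagram (Y - D)"
    unfolding young_diagram_def
  proof (intro conjI)
    show "finite (Y - D)" using yd_finite[OF Y] by simp
    show "\<forall>(x, y)\<in>Y - D. 1 \<le> x \<and> 1 \<le> y" using yd_pos[OF Y] by auto
    show "\<forall>x y x' y'. (x, y) \<in> Y - D \<and> 1 \<le> x' \<and> x' \<le> x \<and> 1 \<le> y' \<and> y' \<le> y \<longrightarrow> (x', y') \<in> Y - D"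
    proof (intro allI impI)
      fix x y x' y' assume a: "(x, y) \<in> Y - D \<and> 1 \<le> x' \<and> x' \<le> x \<and> 1 \<le> y' \<and> y' \<le> y"
      then have "(x',y') \<in> Y" using yd_closed[OF Y, of x y x' y'] by auto
      moreover have "(x',y') \<notin> D" using h a by blast
      ultimately show "(x', y') \<in> Y - D" by simp
    qed
  qed
qed

lemma corner_yd:
  assumes Y: "young_diagram Y" and u: "u \<in> corners Y"
  shows "young_diagram (Y - {u})"
proof -
  obtain x y where uxy: "u = (x,y)" by force
  have uY: "(x,y) \<in> Y" and n: "(x+1,y) \<notin> Y" "(x,y+1) \<notin> Y" using u uxy unfolding corners_def by auto
  have pos: "1 \<le> x" "1 \<le> y" using yd_pos[OF Y uY] by auto
  show ?thesis unfolding uxy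
  proof (subst yd_diff[OF Y])
    show "{(x,y)} \<subseteq> Y" using uY by simp
    show "\<forall>a b a' b'. (a,b) \<in> Y - {(x,y)} \<and> (a',b') \<in> {(x,y)} \<longrightarrow> \<not> (a' \<le> a \<and> b' \<le> b)"
    proof (intro allI impI notI)
      fix a b a' b' assume h: "(a,b) \<in> Y - {(x,y)} \<and> (a',b') \<in> {(x,y)}" and l: "a' \<le> a \<and> b' \<le> b"
      then have "(x+1,y) \<in> Y \<or> (x,y+1) \<in> Y" using dom_lemma[OF Y _ _ _ _ pos, of a b] by auto
      then show False using n by simp
    qed
  qed
qed

lemma corners_sub: "corners Y \<subseteq> Y" unfolding corners_def by auto

lemma corner_mem:
  "u \<in> corners Y \<longleftrightarrow> u \<in> Y \<and> (fst u + 1, snd u) \<notin> Y \<and> (fst u, snd u + 1) \<notin> Y"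
  unfolding corners_def by (cases u) auto

lemma ident_from_main1:
  assumes Y: "young_diagram Y"
  shows "(\<Sum>u\<in>corners Y. 1 / real (hook_prod (Y - {u}))) = real (card Y) / real (hook_prod Y)"
    and "(\<Sum>u\<in>corners Y. real_of_int (content u) / real (hook_prod (Y - {u})))
         = 2 * real_of_int (\<Sum>u\<in>Y. content u) / real (hook_prod Y)"
proof -
  have Hp: "real (hook_prod Y) > 0"
    unfolding hook_prod_def using hook_pos[OF Y]
  proof -
    have "0 < (\<Prod>v\<in>Y. real (hook Y v))"
    proof (rule prod_pos)
      fix v assume "v \<in> Y"
      then show "0 < real (hook Y v)" using hook_pos[OF Y, of "fst v" "snd v"] by simp
    qed
    then show "0 < real (\<Prod>v\<in>Y. hook Y v)" by simp
  qed
  have "(\<Sum>u\<in>corners Y. 1 / real (hook_prod (Y - {u}))) = (\<Sum>u\<in>corners Y. real (hook_prod Y) / real (hook_prod (Y - {u}))) / real (hook_prod Y)"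
    using Hp by (simp add: sum_divide_distrib)
  then show "(\<Sum>u\<in>corners Y. 1 / real (hook_prod (Y - {u}))) = real (card Y) / real (hook_prod Y)"
    using main1(1)[OF Y] by simp
  have "(\<Sum>u\<in>corners Y. real_of_int (content u) / real (hook_prod (Y - {u})))
      = (\<Sum>u\<in>corners Y. real_of_int (content u) * (real (hook_prod Y) / real (hook_prod (Y - {u})))) / real (hook_prod Y)"
    using Hp by (simp add: sum_divide_distrib)
  then show "(\<Sum>u\<in>corners Y. real_of_int (content u) / real (hook_prod (Y - {u})))
         = 2 * real_of_int (\<Sum>u\<in>Y. content u) / real (hook_prod Y)"
    using main1(2)[OF Y] by simp
qed


lemma hd_char:
  assumes Y: "young_diagram Y" and a: "(x,y) \<in> Y" "(x,y+1) \<in> Y"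
  shows "young_diagram (Y - {(x,y),(x,y+1)}) \<longleftrightarrow> (x+1,y) \<notin> Y \<and> (x,y+2) \<notin> Y"
proof -
  have pos: "1 \<le> x" "1 \<le> y" using yd_pos[OF Y a(1)] by auto
  have D: "{(x,y),(x,y+1)} \<subseteq> Y" using a by simp
  show ?thesis
  proof (subst yd_diff[OF Y D], intro iffI conjI)
    assume h: "\<forall>a b a' b'. (a,b) \<in> Y - {(x,y),(x,y+1)} \<and> (a',b') \<in> {(x,y),(x,y+1)} \<longrightarrow> \<not> (a' \<le> a \<and> b' \<le> b)"
    show "(x+1,y) \<notin> Y" using h[rule_format, of "x+1" y x y] by auto
    show "(x,y+2) \<notin> Y" using h[rule_format, of x "y+2" x y] by auto
  next
    assume h: "(x+1,y) \<notin> Y \<and> (x,y+2) \<notin> Y"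
    show "\<forall>a b a' b'. (a,b) \<in> Y - {(x,y),(x,y+1)} \<and> (a',b') \<in> {(x,y),(x,y+1)} \<longrightarrow> \<not> (a' \<le> a \<and> b' \<le> b)"
    proof (intro allI impI notI)
      fix a b a' b' assume ab: "(a,b) \<in> Y - {(x,y),(x,y+1)} \<and> (a',b') \<in> {(x,y),(x,y+1)}" and l: "a' \<le> a \<and> b' \<le> b"
      have xa: "x \<le> a" "y \<le> b" using ab l by auto
      show False
      proof (cases "x < a")
        case True
        then have "(x+1,y) \<in> Y" using yd_closed[OF Y, of a b "x+1" y] ab xa pos by auto
        then show False using h by simp
      next
        case False
        then have "a = x" using xa by simp
        then have "y + 2 \<le> b" using ab xa by auto
        then have "(x,y+2) \<in> Y" using yd_closed[OF Y, of a b x "y+2"] ab \<open>a = x\<close> pos by auto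
        then show False using h by simp
      qed
    qed
  qed
qed

lemma vd_char:
  assumes Y: "young_diagram Y" and a: "(x,y) \<in> Y" "(x+1,y) \<in> Y"
  shows "young_diagram (Y - {(x,y),(x+1,y)}) \<longleftrightarrow> (x,y+1) \<notin> Y \<and> (x+2,y) \<notin> Y"
proof -
  have pos: "1 \<le> x" "1 \<le> y" using yd_pos[OF Y a(1)] by auto
  have D: "{(x,y),(x+1,y)} \<subseteq> Y" using a by simp
  show ?thesis
  proof (subst yd_diff[OF Y D], intro iffI conjI)
    assume h: "\<forall>a b a' b'. (a,b) \<in> Y - {(x,y),(x+1,y)} \<and> (a',b') \<in> {(x,y),(x+1,y)} \<longrightarrow> \<not> (a' \<le> a \<and> b' \<le> b)"
    show "(x,y+1) \<notin> Y" using h[rule_format, of x "y+1" x y] by auto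
    show "(x+2,y) \<notin> Y" using h[rule_format, of "x+2" y x y] by auto
  next
    assume h: "(x,y+1) \<notin> Y \<and> (x+2,y) \<notin> Y"
    show "\<forall>a b a' b'. (a,b) \<in> Y - {(x,y),(x+1,y)} \<and> (a',b') \<in> {(x,y),(x+1,y)} \<longrightarrow> \<not> (a' \<le> a \<and> b' \<le> b)"
    proof (intro allI impI notI)
      fix a b a' b' assume ab: "(a,b) \<in> Y - {(x,y),(x+1,y)} \<and> (a',b') \<in> {(x,y),(x+1,y)}" and l: "a' \<le> a \<and> b' \<le> b"
      have xa: "x \<le> a" "y \<le> b" using ab l by auto
      show False
      proof (cases "y < b")
        case True
        then have "(x,y+1) \<in> Y" using yd_closed[OF Y, of a b x "y+1"] ab xa pos by auto
        then show False using h by simp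
      next
        case False
        then have "b = y" using xa by simp
        then have "x + 2 \<le> a" using ab xa by auto
        then have "(x+2,y) \<in> Y" using yd_closed[OF Y, of a b "x+2" y] ab \<open>b = y\<close> pos by auto
        then show False using h by simp
      qed
    qed
  qed
qed


definition hp :: "(nat \<times> nat) set \<Rightarrow> real" where "hp Z = real (hook_prod Z)"
definition cc :: "nat \<times> nat \<Rightarrow> real" where "cc u = real_of_int (content u)"

lemma hp_pos:
  assumes Y: "young_diagram Y"
  shows "hp Y > 0"
proof -
  have "0 < (\<Prod>v\<in>Y. real (hook Y v))"
  proof (rule prod_pos)
    fix v assume "v \<in> Y"
    then show "0 < real (hook Y v)" using hook_pos[OF Y, of "fst v" "snd v"] by simp
  qed
  then show ?thesis unfolding hp_def hook_prod_def by simp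
qed

lemma stepA:
  assumes Y: "young_diagram Y"
  shows "(\<Sum>u\<in>corners Y. \<Sum>v\<in>corners (Y - {u}). (cc u - cc v) / hp (Y - {u} - {v}))
       = 2 * real_of_int (\<Sum>u\<in>Y. content u) / hp Y"
proof -
  define n where "n = real (card Y)"
  define C where "C = real_of_int (\<Sum>u\<in>Y. content u)"
  have fin: "finite Y" using Y by (rule yd_finite)
  have inner: "(\<Sum>v\<in>corners (Y - {u}). (cc u - cc v) / hp (Y - {u} - {v}))
      = ((n + 1) * cc u - 2 * C) / hp (Y - {u})" if u: "u \<in> corners Y" for u
  proof -
    have Z: "young_diagram (Y - {u})" by (rule corner_yd[OF Y u])
    have uY: "u \<in> Y" using u corners_sub by auto
    have cZ: "real (card (Y - {u})) = n - 1"
    proof -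
      have "card Y \<ge> 1" using uY fin by (metis One_nat_def Suc_leI card_gt_0_iff empty_iff)
      then show ?thesis using uY fin by (simp add: of_nat_diff n_def)
    qed
    have sZ: "real_of_int (\<Sum>v\<in>Y - {u}. content v) = C - cc u"
      unfolding C_def cc_def using sum_diff1[of Y content u] uY fin by simp
    note I1 = ident_from_main1(1)[OF Z] and I2 = ident_from_main1(2)[OF Z]
    have "(\<Sum>v\<in>corners (Y - {u}). (cc u - cc v) / hp (Y - {u} - {v}))
        = cc u * (\<Sum>v\<in>corners (Y - {u}). 1 / hp (Y - {u} - {v})) - (\<Sum>v\<in>corners (Y - {u}). cc v / hp (Y - {u} - {v}))"
      by (simp add: sum_distrib_left sum_subtractf diff_divide_distrib)
    also have "\<dots> = cc u * ((n - 1) / hp (Y - {u})) - 2 * (C - cc u) / hp (Y - {u})"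
      using I1 I2 cZ sZ unfolding hp_def cc_def by simp
    also have "\<dots> = ((n + 1) * cc u - 2 * C) / hp (Y - {u})"
      using hp_pos[OF Z] by (simp add: field_simps)
    finally show ?thesis .
  qed
  have "(\<Sum>u\<in>corners Y. \<Sum>v\<in>corners (Y - {u}). (cc u - cc v) / hp (Y - {u} - {v}))
      = (\<Sum>u\<in>corners Y. ((n + 1) * cc u - 2 * C) / hp (Y - {u}))"
    by (rule sum.cong) (simp_all add: inner)
  also have "\<dots> = (n + 1) * (\<Sum>u\<in>corners Y. cc u / hp (Y - {u})) - 2 * C * (\<Sum>u\<in>corners Y. 1 / hp (Y - {u}))"
    by (simp add: sum_distrib_left sum_subtractf diff_divide_distrib)
  also have "\<dots> = (n + 1) * (2 * C / hp Y) - 2 * C * (n / hp Y)"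
    using ident_from_main1[OF Y] unfolding hp_def cc_def n_def C_def by simp
  also have "\<dots> = 2 * C / hp Y" using hp_pos[OF Y] by (simp add: field_simps)
  finally show ?thesis unfolding C_def .
qed


lemma dom_injH:
  assumes e: "{(x,y),(x,y+1::nat)} = {(x',y'),(x',y'+1)}"
  shows "(x,y) = (x'::nat,y')"
proof -
  have "(x,y) \<in> {(x',y'),(x',y'+1)}" unfolding e[symmetric] by simp
  then have a: "x = x'" "y = y' \<or> y = y' + 1" by auto
  have "(x',y') \<in> {(x,y),(x,y+1)}" unfolding e by simp
  then have b: "y' = y \<or> y' = y + 1" by auto
  show ?thesis using a b by auto
qed

lemma dom_injV:
  assumes e: "{(x,y),(x+1::nat,y)} = {(x',y'),(x'+1,y')}"
  shows "(x,y) = (x',y'::nat)"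
proof -
  have "(x,y) \<in> {(x',y'),(x'+1,y')}" unfolding e[symmetric] by simp
  then have a: "y = y'" "x = x' \<or> x = x' + 1" by auto
  have "(x',y') \<in> {(x,y),(x+1,y)}" unfolding e by simp
  then have b: "x' = x \<or> x' = x + 1" by auto
  show ?thesis using a b by auto
qed

lemma stepB:
  assumes Y: "young_diagram Y"
  shows "(\<Sum>u\<in>corners Y. \<Sum>v\<in>corners (Y - {u}). (cc u - cc v) / hp (Y - {u} - {v}))
       = (\<Sum>d\<in>HD Y. 1 / hp (Y - d)) - (\<Sum>d\<in>VD Y. 1 / hp (Y - d))"
proof -
  have fin: "finite Y" using Y by (rule yd_finite)
  define P where "P = Sigma (corners Y) (\<lambda>u. corners (Y - {u}))"
  define g where "g = (\<lambda>p. (cc (fst p) - cc (snd p)) / hp (Y - {fst p} - {snd p}))"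
  have finC: "finite (corners Y)" using fin corners_sub by (rule finite_subset[rotated])
  have finC2: "finite (corners (Y - {u}))" for u using fin corners_sub[of "Y - {u}"] by (meson finite_Diff finite_subset)
  have finP: "finite P" unfolding P_def using finC finC2 by simp
  have LHS: "(\<Sum>u\<in>corners Y. \<Sum>v\<in>corners (Y - {u}). (cc u - cc v) / hp (Y - {u} - {v})) = (\<Sum>p\<in>P. g p)"
    unfolding P_def g_def using sum.Sigma[OF finC, of "\<lambda>u. corners (Y - {u})" "\<lambda>u v. (cc u - cc v) / hp (Y - {u} - {v})"] finC2
    by (simp add: case_prod_beta')
  define H1 where "H1 = {p\<in>P. fst p = (fst (snd p), snd (snd p) + 1)}"
  define V1 where "V1 = {p\<in>P. fst p = (fst (snd p) + 1, snd (snd p))}"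
  define NN where "NN = P - H1 - V1"
  have Pdec: "P = (H1 \<union> V1) \<union> NN" unfolding NN_def H1_def V1_def by auto
  have sumP: "(\<Sum>p\<in>P. g p) = (\<Sum>p\<in>H1. g p) + (\<Sum>p\<in>V1. g p) + (\<Sum>p\<in>NN. g p)"
  proof -
    have f: "finite H1" "finite V1" "finite NN" unfolding H1_def V1_def NN_def using finP by auto
    have "(\<Sum>p\<in>P. g p) = (\<Sum>p\<in>H1 \<union> V1. g p) + (\<Sum>p\<in>NN. g p)"
      unfolding Pdec by (rule sum.union_disjoint) (use f in \<open>auto simp: NN_def\<close>)
    also have "(\<Sum>p\<in>H1 \<union> V1. g p) = (\<Sum>p\<in>H1. g p) + (\<Sum>p\<in>V1. g p)"
      by (rule sum.union_disjoint) (use f in \<open>auto simp: H1_def V1_def\<close>)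
    finally show ?thesis .
  qed
  (* non-adjacent pairs cancel *)
  have swapNN: "prod.swap p \<in> NN" if p: "p \<in> NN" for p
  proof -
    obtain u v where uv: "p = (u,v)" by (cases p)
    obtain a b where v: "v = (a,b)" by (cases v)
    have uC: "u \<in> corners Y" and vC: "v \<in> corners (Y - {u})"
      and nh: "u \<noteq> (a, b+1)" and nv: "u \<noteq> (a+1, b)"
      using p uv v unfolding NN_def P_def H1_def V1_def by auto
    have uY: "u \<in> Y" and un1: "(fst u + 1, snd u) \<notin> Y" and un2: "(fst u, snd u + 1) \<notin> Y"
      using uC corner_mem by auto
    have vY: "v \<in> Y" "v \<noteq> u" and vn1: "(a+1,b) \<notin> Y - {u}" and vn2: "(a,b+1) \<notin> Y - {u}"
      using vC corner_mem[of v "Y - {u}"] v by auto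
    have vC': "v \<in> corners Y" using vY vn1 vn2 nh nv v corner_mem[of v Y] by auto
    have uC': "u \<in> corners (Y - {v})" using uY un1 un2 vY corner_mem[of u "Y - {v}"] by auto
    have n1: "v \<noteq> (fst u, snd u + 1)" using un2 vY by auto
    have n2: "v \<noteq> (fst u + 1, snd u)" using un1 vY by auto
    show ?thesis unfolding uv NN_def P_def H1_def V1_def using vC' uC' n1 n2 by auto
  qed
  have swapim: "prod.swap ` NN = NN"
  proof
    show "prod.swap ` NN \<subseteq> NN" using swapNN by auto
    show "NN \<subseteq> prod.swap ` NN"
    proof
      fix p assume "p \<in> NN"
      then have "prod.swap p \<in> NN" by (rule swapNN)
      moreover have "p = prod.swap (prod.swap p)" by simp
      ultimately show "p \<in> prod.swap ` NN" by blast
    qed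
  qed
  have gswap: "g (prod.swap p) = - g p" for p
  proof -
    have "Y - {snd p} - {fst p} = Y - {fst p} - {snd p}" by auto
    then show ?thesis unfolding g_def fst_swap snd_swap by (simp only: minus_divide_left minus_diff_eq)
  qed
  have NN0: "(\<Sum>p\<in>NN. g p) = 0"
  proof -
    have "(\<Sum>p\<in>NN. g p) = (\<Sum>p\<in>prod.swap ` NN. g p)" using swapim by simp
    also have "\<dots> = (\<Sum>p\<in>NN. g (prod.swap p))" by (subst sum.reindex) (auto simp: inj_on_def)
    also have "\<dots> = - (\<Sum>p\<in>NN. g p)" by (simp add: gswap sum_negf)
    finally show ?thesis by simp
  qed
  define Q where "Q = {(x,y). (x,y) \<in> Y \<and> (x,y+1) \<in> Y \<and> young_diagram (Y - {(x,y),(x,y+1)})}"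
  have HDeq: "HD Y = (\<lambda>(x,y). {(x,y),(x,y+1)}) ` Q"
  proof (intro set_eqI)
    fix d
    have mem: "d \<in> HD Y \<longleftrightarrow> (\<exists>x y. d = {(x,y),(x,y+1)} \<and> (x,y)\<in>Y \<and> (x,y+1)\<in>Y \<and> young_diagram (Y - {(x,y),(x,y+1)}))"
      unfolding HD_def by (rule mem_Collect_eq)
    have "d \<in> (\<lambda>(x,y). {(x,y),(x,y+1)}) ` Q \<longleftrightarrow> (\<exists>q\<in>Q. d = (\<lambda>(x,y). {(x,y),(x,y+1)}) q)" by (rule image_iff)
    also have "\<dots> \<longleftrightarrow> (\<exists>x y. d = {(x,y),(x,y+1)} \<and> (x,y)\<in>Y \<and> (x,y+1)\<in>Y \<and> young_diagram (Y - {(x,y),(x,y+1)}))"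
      unfolding Q_def by auto
    finally show "d \<in> HD Y \<longleftrightarrow> d \<in> (\<lambda>(x,y). {(x,y),(x,y+1)}) ` Q" using mem by simp
  qed
  have injHD: "inj_on (\<lambda>(x,y). {(x,y),(x,y+1::nat)}) Q"
  proof (rule inj_onI)
    fix a b :: "nat \<times> nat" assume "(\<lambda>(x,y). {(x,y),(x,y+1::nat)}) a = (\<lambda>(x,y). {(x,y),(x,y+1::nat)}) b"
    then show "a = b" using dom_injH by (cases a, cases b) simp
  qed
  have H1eq: "H1 = (\<lambda>(x,y). ((x,y+1),(x,y))) ` Q"
  proof
    show "H1 \<subseteq> (\<lambda>(x,y). ((x,y+1),(x,y))) ` Q"
    proof
      fix p assume p: "p \<in> H1"
      obtain u x y where uv: "p = (u,(x,y))" by (cases p) auto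
      have u: "u = (x,y+1)" using p uv unfolding H1_def by auto
      have uC: "(x,y+1) \<in> corners Y" and vC: "(x,y) \<in> corners (Y - {(x,y+1)})"
        using p uv u unfolding H1_def P_def by auto
      have a1: "(x,y+1) \<in> Y" "(x,y+2) \<notin> Y" using uC corner_mem[of "(x,y+1)" Y] by auto
      have a2: "(x,y) \<in> Y" "(x+1,y) \<notin> Y" using vC corner_mem[of "(x,y)" "Y - {(x,y+1)}"] by auto
      have "(x,y) \<in> Q" unfolding Q_def using hd_char[OF Y a2(1) a1(1)] a1 a2 by simp
      then show "p \<in> (\<lambda>(x,y). ((x,y+1),(x,y))) ` Q" using uv u by force
    qed
    show "(\<lambda>(x,y). ((x,y+1),(x,y))) ` Q \<subseteq> H1"
    proof
      fix p assume "p \<in> (\<lambda>(x,y). ((x,y+1),(x,y))) ` Q"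
      then obtain x y where p: "p = ((x,y+1),(x,y))" and q: "(x,y) \<in> Q" by auto
      have a: "(x,y) \<in> Y" "(x,y+1) \<in> Y" using q unfolding Q_def by auto
      have b: "(x+1,y) \<notin> Y" "(x,y+2) \<notin> Y" using q hd_char[OF Y a] unfolding Q_def by auto
      have pos: "1 \<le> x" "1 \<le> y" using yd_pos[OF Y a(1)] by auto
      have c: "(x+1,y+1) \<notin> Y" using yd_closed[OF Y, of "x+1" "y+1" "x+1" y] b pos by auto
      have uC: "(x,y+1) \<in> corners Y" using a b c corner_mem[of "(x,y+1)" Y] by (simp add: numeral_2_eq_2)
      have vC: "(x,y) \<in> corners (Y - {(x,y+1)})" using a b corner_mem[of "(x,y)" "Y - {(x,y+1)}"] by simp
      show "p \<in> H1" unfolding p H1_def P_def using uC vC by simp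
    qed
  qed
  have injH1: "inj_on (\<lambda>(x,y). ((x,y+1),(x::nat,y::nat))) Q" by (auto simp: inj_on_def)
  have sumH: "(\<Sum>p\<in>H1. g p) = (\<Sum>d\<in>HD Y. 1 / hp (Y - d))"
  proof -
    have "(\<Sum>p\<in>H1. g p) = (\<Sum>q\<in>Q. g ((fst q, snd q + 1), q))"
      unfolding H1eq by (subst sum.reindex[OF injH1]) (simp add: case_prod_beta')
    also have "\<dots> = (\<Sum>q\<in>Q. 1 / hp (Y - {q, (fst q, snd q + 1)}))"
    proof (rule sum.cong)
      fix q assume "q \<in> Q"
      have e: "Y - {(fst q, snd q + 1)} - {q} = Y - {q, (fst q, snd q + 1)}" by auto
      have c: "cc (fst q, snd q + 1) - cc q = 1" unfolding cc_def content_def by simp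
      show "g ((fst q, snd q + 1), q) = 1 / hp (Y - {q, (fst q, snd q + 1)})"
        unfolding g_def fst_conv snd_conv e c ..
    qed simp
    also have "\<dots> = (\<Sum>d\<in>HD Y. 1 / hp (Y - d))"
      unfolding HDeq by (subst sum.reindex[OF injHD]) (simp add: case_prod_beta')
    finally show ?thesis .
  qed
  define Q' where "Q' = {(x,y). (x,y) \<in> Y \<and> (x+1,y) \<in> Y \<and> young_diagram (Y - {(x,y),(x+1,y)})}"
  have VDeq: "VD Y = (\<lambda>(x,y). {(x,y),(x+1,y)}) ` Q'"
  proof (intro set_eqI)
    fix d
    have mem: "d \<in> VD Y \<longleftrightarrow> (\<exists>x y. d = {(x,y),(x+1,y)} \<and> (x,y)\<in>Y \<and> (x+1,y)\<in>Y \<and> young_diagram (Y - {(x,y),(x+1,y)}))"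
      unfolding VD_def by (rule mem_Collect_eq)
    have "d \<in> (\<lambda>(x,y). {(x,y),(x+1,y)}) ` Q' \<longleftrightarrow> (\<exists>q\<in>Q'. d = (\<lambda>(x,y). {(x,y),(x+1,y)}) q)" by (rule image_iff)
    also have "\<dots> \<longleftrightarrow> (\<exists>x y. d = {(x,y),(x+1,y)} \<and> (x,y)\<in>Y \<and> (x+1,y)\<in>Y \<and> young_diagram (Y - {(x,y),(x+1,y)}))"
      unfolding Q'_def by auto
    finally show "d \<in> VD Y \<longleftrightarrow> d \<in> (\<lambda>(x,y). {(x,y),(x+1,y)}) ` Q'" using mem by simp
  qed
  have injVD: "inj_on (\<lambda>(x,y). {(x,y),(x+1::nat,y)}) Q'"
  proof (rule inj_onI)
    fix a b :: "nat \<times> nat" assume "(\<lambda>(x,y). {(x,y),(x+1::nat,y)}) a = (\<lambda>(x,y). {(x,y),(x+1::nat,y)}) b"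
    then show "a = b" using dom_injV by (cases a, cases b) simp
  qed
  have V1eq: "V1 = (\<lambda>(x,y). ((x+1,y),(x,y))) ` Q'"
  proof
    show "V1 \<subseteq> (\<lambda>(x,y). ((x+1,y),(x,y))) ` Q'"
    proof
      fix p assume p: "p \<in> V1"
      obtain u x y where uv: "p = (u,(x,y))" by (cases p) auto
      have u: "u = (x+1,y)" using p uv unfolding V1_def by auto
      have uC: "(x+1,y) \<in> corners Y" and vC: "(x,y) \<in> corners (Y - {(x+1,y)})"
        using p uv u unfolding V1_def P_def by auto
      have a1: "(x+1,y) \<in> Y" "(x+2,y) \<notin> Y" using uC corner_mem[of "(x+1,y)" Y] by (auto simp: numeral_2_eq_2)
      have a2: "(x,y) \<in> Y" "(x,y+1) \<notin> Y" using vC corner_mem[of "(x,y)" "Y - {(x+1,y)}"] by auto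
      have "(x,y) \<in> Q'" unfolding Q'_def using vd_char[OF Y a2(1) a1(1)] a1 a2 by simp
      then show "p \<in> (\<lambda>(x,y). ((x+1,y),(x,y))) ` Q'" using uv u by force
    qed
    show "(\<lambda>(x,y). ((x+1,y),(x,y))) ` Q' \<subseteq> V1"
    proof
      fix p assume "p \<in> (\<lambda>(x,y). ((x+1,y),(x,y))) ` Q'"
      then obtain x y where p: "p = ((x+1,y),(x,y))" and q: "(x,y) \<in> Q'" by auto
      have a: "(x,y) \<in> Y" "(x+1,y) \<in> Y" using q unfolding Q'_def by auto
      have b: "(x,y+1) \<notin> Y" "(x+2,y) \<notin> Y" using q vd_char[OF Y a] unfolding Q'_def by auto
      have pos: "1 \<le> x" "1 \<le> y" using yd_pos[OF Y a(1)] by auto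
      have c: "(x+1,y+1) \<notin> Y" using yd_closed[OF Y, of "x+1" "y+1" x "y+1"] b pos by auto
      have uC: "(x+1,y) \<in> corners Y" using a b c corner_mem[of "(x+1,y)" Y] by (simp add: numeral_2_eq_2)
      have vC: "(x,y) \<in> corners (Y - {(x+1,y)})" using a b corner_mem[of "(x,y)" "Y - {(x+1,y)}"] by simp
      show "p \<in> V1" unfolding p V1_def P_def using uC vC by simp
    qed
  qed
  have injV1: "inj_on (\<lambda>(x,y). ((x+1,y),(x::nat,y::nat))) Q'" by (auto simp: inj_on_def)
  have sumV: "(\<Sum>p\<in>V1. g p) = - (\<Sum>d\<in>VD Y. 1 / hp (Y - d))"
  proof -
    have "(\<Sum>p\<in>V1. g p) = (\<Sum>q\<in>Q'. g ((fst q + 1, snd q), q))"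
      unfolding V1eq by (subst sum.reindex[OF injV1]) (simp add: case_prod_beta')
    also have "\<dots> = (\<Sum>q\<in>Q'. - (1 / hp (Y - {q, (fst q + 1, snd q)})))"
    proof (rule sum.cong)
      fix q assume "q \<in> Q'"
      have e: "Y - {(fst q + 1, snd q)} - {q} = Y - {q, (fst q + 1, snd q)}" by auto
      have c: "cc (fst q + 1, snd q) - cc q = - 1" unfolding cc_def content_def by simp
      show "g ((fst q + 1, snd q), q) = - (1 / hp (Y - {q, (fst q + 1, snd q)}))"
        unfolding g_def fst_conv snd_conv e c by simp
    qed simp
    also have "\<dots> = - (\<Sum>d\<in>VD Y. 1 / hp (Y - d))"
      unfolding VDeq by (subst sum.reindex[OF injVD]) (simp add: case_prod_beta' sum_negf)
    finally show ?thesis .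
  qed
  show ?thesis unfolding LHS sumP sumH sumV NN0 by simp
qed

theorem proposition4p3:
  fixes Y :: "(nat \<times> nat) set"
  assumes "young_diagram Y"
  shows "(2 * real_of_int (\<Sum>u\<in>Y. content u) / real (hook_prod Y)
           = (\<Sum>u\<in>corners Y. real_of_int (content u) / real (hook_prod (Y - {u}))))
       \<and> (2 * real_of_int (\<Sum>u\<in>Y. content u) / real (hook_prod Y)
           = (\<Sum>d\<in>HD Y. 1 / real (hook_prod (Y - d)))
             - (\<Sum>d\<in>VD Y. 1 / real (hook_prod (Y - d))))"
proof
  show "2 * real_of_int (\<Sum>u\<in>Y. content u) / real (hook_prod Y)
           = (\<Sum>u\<in>corners Y. real_of_int (content u) / real (hook_prod (Y - {u})))"
    using ident_from_main1(2)[OF assms] by simp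
  show "2 * real_of_int (\<Sum>u\<in>Y. content u) / real (hook_prod Y)
           = (\<Sum>d\<in>HD Y. 1 / real (hook_prod (Y - d)))
             - (\<Sum>d\<in>VD Y. 1 / real (hook_prod (Y - d)))"
    using stepA[OF assms] stepB[OF assms] unfolding hp_def by simp
qed

end
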